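(* Let $A$ be a braided group in $\mathcal C$ and $B$ a braided group in $\mathcal{YD}(\mathcal C)^A_A$ with right $A$-action $\mu^B_r$ and coaction $\Delta^B_r$. Then the antipode of the cross product $A\rtimes B$ satisfies $S_{A\rtimes B}\circ S_{A\rtimes B}=(S_A^2\otimes S_B^2)\circ\Psi_{B,A}\circ\Psi_{A,B}\circ(A\otimes\sigma_{B/A})$, where $\sigma_{B/A}:=\mu^B_r\circ(B\otimes S_A)\circ\Delta^B_r$.
   Context: $\mathcal C$ is a braided monoidal category, assumed strict, with tensor product $\otimes$, unit $\underline 1$ and braiding $\Psi_{X,Y}:X\otimes Y\to Y\otimes X$. Inside tensor products of morphisms an object name $X$ stands for ${\rm id}_X$. A braided group in a braided category $(\mathcal D,\Phi)$ is a bialgebra $(A,\mu,\eta,\Delta,\epsilon)$ (with $\Delta\circ\mu=(\mu\otimes\mu)\circ(A\otimes\Phi_{A,A}\otimes A)\circ(\Delta\otimes\Delta)$ and unit/counit compatibilities) with antipode $S$. $\mathcal{YD}(\mathcal C)^A_A$ is the braided category of right crossed modules over $A$: right modules $\mu_r:X\otimes A\to X$ and comodules $\Delta_r:X\to X\otimes A$ with $(X\otimes\mu)\circ(\Psi_{A,X}\otimes A)\circ(A\otimes(\Delta_r\circ\mu_r))\circ(\Psi_{X,A}\otimes A)\circ(X\otimes\Delta)=(\mu_r\otimes\mu)\circ(X\otimes\Psi_{A,A}\otimes A)\circ(\Delta_r\otimes\Delta)$; tensor product action $(\mu^X_r\otimes\mu^Y_r)\circ(X\otimes\Psi_{Y,A}\otimes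 A)\circ(X\otimes Y\otimes\Delta)$, coaction $(X\otimes Y\otimes\mu)\circ(X\otimes\Psi_{A,Y}\otimes A)\circ(\Delta^X_r\otimes\Delta^Y_r)$; braiding $(Y\otimes\mu^X_r)\circ(\Psi_{X,Y}\otimes A)\circ(X\otimes\Delta^Y_r)$. The cross product $A\rtimes B$ is $A\otimes B$ with multiplication $(\mu_A\otimes\mu_B)\circ(A\otimes A\otimes\mu^B_r\otimes B)\circ(A\otimes\Psi_{B,A}\otimes A\otimes B)\circ(A\otimes B\otimes\Delta_A\otimes B)$, unit $\eta_A\otimes\eta_B$, comultiplication $(A\otimes B\otimes\mu_A\otimes B)\circ(A\otimes\Psi_{A,B}\otimes A\otimes B)\circ(A\otimes A\otimes\Delta^B_r\otimes B)\circ(\Delta_A\otimes\Delta_B)$, counit $\epsilon_A\otimes\epsilon_B$, and antipode $S_{A\rtimes B}=(A\otimes\mu^B_r)\circ(\Psi_{B,A}\otimes A)\circ(S_B\otimes(\Delta_A\circ S_A\circ\mu_A))\circ(\Psi_{A,B}\otimes A)\circ(A\otimes\Delta^B_r)$. *)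

theory Defs
  imports Main
begin

record ('o, 'm) bmcat =
  Arr :: "'m \<Rightarrow> bool"
  Dom :: "'m \<Rightarrow> 'o"
  Cod :: "'m \<Rightarrow> 'o"
  Id  :: "'o \<Rightarrow> 'm"
  Cmp :: "'m \<Rightarrow> 'm \<Rightarrow> 'm"   (* Cmp C g f = g o f *)
  TO  :: "'o \<Rightarrow> 'o \<Rightarrow> 'o"
  TM  :: "'m \<Rightarrow> 'm \<Rightarrow> 'm"
  UnitO  :: "'o"
  Br  :: "'o \<Rightarrow> 'o \<Rightarrow> 'm"   (* braiding Psi_{X,Y} : X (x) Y -> Y (x) X *)

definition hom :: "('o, 'm) bmcat \<Rightarrow> 'm \<Rightarrow> 'o \<Rightarrow> 'o \<Rightarrow> bool" where
  "hom C f a b \<longleftrightarrow> Arr C f \<and> Dom C f = a \<and> Cod C f = b"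

definition braided_strict_monoidal :: "('o, 'm) bmcat \<Rightarrow> bool" where
  "braided_strict_monoidal C \<longleftrightarrow>
    \<comment> \<open>category\<close>
    (\<forall>a. hom C (Id C a) a a) \<and>
    (\<forall>f g. Arr C f \<and> Arr C g \<and> Dom C g = Cod C f \<longrightarrow>
        hom C (Cmp C g f) (Dom C f) (Cod C g)) \<and>
    (\<forall>f g h. Arr C f \<and> Arr C g \<and> Arr C h \<and> Dom C g = Cod C f \<and> Dom C h = Cod C g \<longrightarrow>
        Cmp C h (Cmp C g f) = Cmp C (Cmp C h g) f) \<and>
    (\<forall>f. Arr C f \<longrightarrow> Cmp C (Id C (Cod C f)) f = f \<and> Cmp C f (Id C (Dom C f)) = f) \<and>
    \<comment> \<open>tensor bifunctor\<close>
    (\<forall>f g. Arr C f \<and> Arr C g \<longrightarrow>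
        hom C (TM C f g) (TO C (Dom C f) (Dom C g)) (TO C (Cod C f) (Cod C g))) \<and>
    (\<forall>a b. TM C (Id C a) (Id C b) = Id C (TO C a b)) \<and>
    (\<forall>f f' g g'. Arr C f \<and> Arr C f' \<and> Arr C g \<and> Arr C g' \<and>
        Dom C g = Cod C f \<and> Dom C g' = Cod C f' \<longrightarrow>
        Cmp C (TM C g g') (TM C f f') = TM C (Cmp C g f) (Cmp C g' f')) \<and>
    \<comment> \<open>strictness\<close>
    (\<forall>a b c. TO C (TO C a b) c = TO C a (TO C b c)) \<and>
    (\<forall>a. TO C (UnitO C) a = a \<and> TO C a (UnitO C) = a) \<and>
    (\<forall>f g h. Arr C f \<and> Arr C g \<and> Arr C h \<longrightarrow> TM C (TM C f g) h = TM C f (TM C g h)) \<and>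
    (\<forall>f. Arr C f \<longrightarrow> TM C (Id C (UnitO C)) f = f \<and> TM C f (Id C (UnitO C)) = f) \<and>
    \<comment> \<open>braiding: invertible, natural, hexagon identities\<close>
    (\<forall>a b. hom C (Br C a b) (TO C a b) (TO C b a)) \<and>
    (\<forall>a b. \<exists>g. hom C g (TO C b a) (TO C a b) \<and>
        Cmp C g (Br C a b) = Id C (TO C a b) \<and> Cmp C (Br C a b) g = Id C (TO C b a)) \<and>
    (\<forall>f g. Arr C f \<and> Arr C g \<longrightarrow>
        Cmp C (Br C (Cod C f) (Cod C g)) (TM C f g) = Cmp C (TM C g f) (Br C (Dom C f) (Dom C g))) \<and>
    (\<forall>a b c. Br C a (TO C b c) = Cmp C (TM C (Id C b) (Br C a c)) (TM C (Br C a b) (Id C c))) \<and>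
    (\<forall>a b c. Br C (TO C a b) c = Cmp C (TM C (Br C a c) (Id C b)) (TM C (Id C a) (Br C b c)))"

text \<open>Hopf algebra axioms for an object X with structure maps, relative to a braiding
  morphism beta : X (x) X -> X (x) X used in the bialgebra compatibility.\<close>
definition hopf_ax :: "('o, 'm) bmcat \<Rightarrow> 'o \<Rightarrow> 'm \<Rightarrow> 'm \<Rightarrow> 'm \<Rightarrow> 'm \<Rightarrow> 'm \<Rightarrow> 'm \<Rightarrow> bool" where
  "hopf_ax C X mu eta De ep S beta \<longleftrightarrow>
    hom C mu (TO C X X) X \<and> hom C eta (UnitO C) X \<and> hom C De X (TO C X X) \<and>
    hom C ep X (UnitO C) \<and> hom C S X X \<and> hom C beta (TO C X X) (TO C X X) \<and>
    Cmp C mu (TM C mu (Id C X)) = Cmp C mu (TM C (Id C X) mu) \<and>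
    Cmp C mu (TM C eta (Id C X)) = Id C X \<and> Cmp C mu (TM C (Id C X) eta) = Id C X \<and>
    Cmp C (TM C De (Id C X)) De = Cmp C (TM C (Id C X) De) De \<and>
    Cmp C (TM C ep (Id C X)) De = Id C X \<and> Cmp C (TM C (Id C X) ep) De = Id C X \<and>
    Cmp C De mu = Cmp C (TM C mu mu)
        (Cmp C (TM C (TM C (Id C X) beta) (Id C X)) (TM C De De)) \<and>
    Cmp C De eta = TM C eta eta \<and> Cmp C ep mu = TM C ep ep \<and> Cmp C ep eta = Id C (UnitO C) \<and>
    Cmp C mu (Cmp C (TM C S (Id C X)) De) = Cmp C eta ep \<and>
    Cmp C mu (Cmp C (TM C (Id C X) S) De) = Cmp C eta ep"

definition braided_group :: "('o, 'm) bmcat \<Rightarrow> 'o \<Rightarrow> 'm \<Rightarrow> 'm \<Rightarrow> 'm \<Rightarrow> 'm \<Rightarrow> 'm \<Rightarrow> bool" where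
  "braided_group C A mu eta De ep S \<longleftrightarrow> hopf_ax C A mu eta De ep S (Br C A A)"

definition rmod :: "('o, 'm) bmcat \<Rightarrow> 'o \<Rightarrow> 'm \<Rightarrow> 'm \<Rightarrow> 'o \<Rightarrow> 'm \<Rightarrow> bool" where
  "rmod C A muA etaA X act \<longleftrightarrow>
    hom C act (TO C X A) X \<and>
    Cmp C act (TM C act (Id C A)) = Cmp C act (TM C (Id C X) muA) \<and>
    Cmp C act (TM C (Id C X) etaA) = Id C X"

definition rcomod :: "('o, 'm) bmcat \<Rightarrow> 'o \<Rightarrow> 'm \<Rightarrow> 'm \<Rightarrow> 'o \<Rightarrow> 'm \<Rightarrow> bool" where
  "rcomod C A DeA epA X coact \<longleftrightarrow>
    hom C coact X (TO C X A) \<and>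
    Cmp C (TM C coact (Id C A)) coact = Cmp C (TM C (Id C X) DeA) coact \<and>
    Cmp C (TM C (Id C X) epA) coact = Id C X"

definition yd_mod :: "('o, 'm) bmcat \<Rightarrow> 'o \<Rightarrow> 'm \<Rightarrow> 'm \<Rightarrow> 'm \<Rightarrow> 'm \<Rightarrow> 'o \<Rightarrow> 'm \<Rightarrow> 'm \<Rightarrow> bool" where
  "yd_mod C A muA etaA DeA epA X act coact \<longleftrightarrow>
    rmod C A muA etaA X act \<and> rcomod C A DeA epA X coact \<and>
    Cmp C (TM C (Id C X) muA)
      (Cmp C (TM C (Br C A X) (Id C A))
        (Cmp C (TM C (Id C A) (Cmp C coact act))
          (Cmp C (TM C (Br C X A) (Id C A)) (TM C (Id C X) DeA))))
    = Cmp C (TM C act muA)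
        (Cmp C (TM C (TM C (Id C X) (Br C A A)) (Id C A)) (TM C coact DeA))"

definition yd_hom :: "('o, 'm) bmcat \<Rightarrow> 'o \<Rightarrow> 'm \<Rightarrow> 'm \<Rightarrow> 'm \<Rightarrow> 'm \<Rightarrow> 'm \<Rightarrow> bool" where
  "yd_hom C A f actX coactX actY coactY \<longleftrightarrow>
    Cmp C f actX = Cmp C actY (TM C f (Id C A)) \<and>
    Cmp C coactY f = Cmp C (TM C f (Id C A)) coactX"

definition yd_tens_act :: "('o, 'm) bmcat \<Rightarrow> 'o \<Rightarrow> 'm \<Rightarrow> 'o \<Rightarrow> 'm \<Rightarrow> 'o \<Rightarrow> 'm \<Rightarrow> 'm" where
  "yd_tens_act C A DeA X actX Y actY =
    Cmp C (TM C actX actY)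
      (Cmp C (TM C (TM C (Id C X) (Br C Y A)) (Id C A)) (TM C (Id C (TO C X Y)) DeA))"

definition yd_tens_coact :: "('o, 'm) bmcat \<Rightarrow> 'o \<Rightarrow> 'm \<Rightarrow> 'o \<Rightarrow> 'm \<Rightarrow> 'o \<Rightarrow> 'm \<Rightarrow> 'm" where
  "yd_tens_coact C A muA X coactX Y coactY =
    Cmp C (TM C (Id C (TO C X Y)) muA)
      (Cmp C (TM C (TM C (Id C X) (Br C A Y)) (Id C A)) (TM C coactX coactY))"

definition yd_braid :: "('o, 'm) bmcat \<Rightarrow> 'o \<Rightarrow> 'o \<Rightarrow> 'm \<Rightarrow> 'o \<Rightarrow> 'm \<Rightarrow> 'm" where
  "yd_braid C A X actX Y coactY =
    Cmp C (TM C (Id C Y) actX) (Cmp C (TM C (Br C X Y) (Id C A)) (TM C (Id C X) coactY))"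

text \<open>A braided group B in YD(C)^A_A: B is a crossed module, its structure maps are
  morphisms of crossed modules (the unit object carrying the trivial action epsilon_A and
  coaction eta_A, tensor products carrying the tensor product structures), and the Hopf
  axioms hold with respect to the braiding of YD(C)^A_A.\<close>
definition braided_group_YD ::
  "('o, 'm) bmcat \<Rightarrow> 'o \<Rightarrow> 'm \<Rightarrow> 'm \<Rightarrow> 'm \<Rightarrow> 'm \<Rightarrow>
   'o \<Rightarrow> 'm \<Rightarrow> 'm \<Rightarrow> 'm \<Rightarrow> 'm \<Rightarrow> 'm \<Rightarrow> 'm \<Rightarrow> 'm \<Rightarrow> bool" where
  "braided_group_YD C A muA etaA DeA epA B act coact mu eta De ep S \<longleftrightarrow>
    yd_mod C A muA etaA DeA epA B act coact \<and>
    hopf_ax C B mu eta De ep S (yd_braid C A B act B coact) \<and>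
    (let actBB = yd_tens_act C A DeA B act B act;
         coactBB = yd_tens_coact C A muA B coact B coact
     in yd_hom C A mu actBB coactBB act coact \<and>
        yd_hom C A eta epA etaA act coact \<and>
        yd_hom C A De act coact actBB coactBB \<and>
        yd_hom C A ep act coact epA etaA \<and>
        yd_hom C A S act coact act coact)"

definition cross_antipode ::
  "('o, 'm) bmcat \<Rightarrow> 'o \<Rightarrow> 'm \<Rightarrow> 'm \<Rightarrow> 'm \<Rightarrow> 'o \<Rightarrow> 'm \<Rightarrow> 'm \<Rightarrow> 'm \<Rightarrow> 'm" where
  "cross_antipode C A muA DeA SA B act coact SB =
    Cmp C (TM C (Id C A) act)
     (Cmp C (TM C (Br C B A) (Id C A))
      (Cmp C (TM C SB (Cmp C DeA (Cmp C SA muA)))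
       (Cmp C (TM C (Br C A B) (Id C A)) (TM C (Id C A) coact))))"

definition sigma_BA :: "('o, 'm) bmcat \<Rightarrow> 'm \<Rightarrow> 'o \<Rightarrow> 'm \<Rightarrow> 'm \<Rightarrow> 'm" where
  "sigma_BA C SA B act coact = Cmp C act (Cmp C (TM C (Id C B) SA) coact)"

end

theory Submission
  imports Defs
begin

datatype ob = oA | oB
datatype gen = gM | gU | gD | gE | gS | gR | gC | gT | gBr "ob list" "ob list"

fun gdom :: "gen \<Rightarrow> ob list" where
  "gdom gM = [oA,oA]" | "gdom gU = []" | "gdom gD = [oA]" | "gdom gE = [oA]" | "gdom gS = [oA]"
| "gdom gR = [oB,oA]" | "gdom gC = [oB]" | "gdom gT = [oB]" | "gdom (gBr l r) = l @ r"

fun gcod :: "gen \<Rightarrow> ob list" where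
  "gcod gM = [oA]" | "gcod gU = [oA]" | "gcod gD = [oA,oA]" | "gcod gE = []" | "gcod gS = [oA]"
| "gcod gR = [oB]" | "gcod gC = [oB,oA]" | "gcod gT = [oB]" | "gcod (gBr l r) = r @ l"

type_synonym layer = "ob list \<times> gen \<times> ob list"

definition ldom :: "layer \<Rightarrow> ob list" where "ldom x = fst x @ gdom (fst (snd x)) @ snd (snd x)"
definition lcod :: "layer \<Rightarrow> ob list" where "lcod x = fst x @ gcod (fst (snd x)) @ snd (snd x)"

fun codd :: "ob list \<Rightarrow> layer list \<Rightarrow> ob list" where
  "codd s [] = s" | "codd s (x#xs) = codd (lcod x) xs"
fun wtd :: "ob list \<Rightarrow> layer list \<Rightarrow> bool" where
  "wtd s [] = True" | "wtd s (x#xs) = (ldom x = s \<and> wtd (lcod x) xs)"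

definition wh :: "ob list \<Rightarrow> ob list \<Rightarrow> layer \<Rightarrow> layer" where
  "wh xs ys x = (xs @ fst x, fst (snd x), snd (snd x) @ ys)"

type_synonym rel = "layer list \<times> layer list"

definition rwr :: "rel \<Rightarrow> nat \<Rightarrow> layer list \<Rightarrow> layer list option" where
  "rwr r i D = (let L = fst r; R = snd r; x = D!i; x0 = hd L;
      xs = take (length (fst x) - length (fst x0)) (fst x); ys = drop (length (snd (snd x0))) (snd (snd x)) in
      if i < length D \<and> L \<noteq> [] \<and> take (length L) (drop i D) = map (wh xs ys) L
      then Some (take i D @ map (wh xs ys) R @ drop (i + length L) D) else None)"

definition swp :: "nat \<Rightarrow> layer list \<Rightarrow> layer list option" where
  "swp i D = (if Suc i < length D then
     (let l1 = fst (D!i); g = fst (snd (D!i)); r1 = snd (snd (D!i));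
          l2 = fst (D!Suc i); h = fst (snd (D!Suc i)); r2 = snd (snd (D!Suc i)) in
     if length l1 + length (gcod g) \<le> length l2 then
       (let M = drop (length l1 + length (gcod g)) l2 in
       if l2 = l1 @ gcod g @ M \<and> r1 = M @ gdom h @ r2 then
         Some (take i D @ [(l1 @ gdom g @ M, h, r2), (l1, g, M @ gcod h @ r2)] @ drop (Suc (Suc i)) D) else None)
     else if length l2 + length (gdom h) \<le> length l1 then
       (let M = drop (length l2 + length (gdom h)) l1 in
       if l1 = l2 @ gdom h @ M \<and> r2 = M @ gcod g @ r1 then
         Some (take i D @ [(l2, h, M @ gdom g @ r1), (l2 @ gcod h @ M, g, r1)] @ drop (Suc (Suc i)) D) else None)
     else None) else None)"

datatype op = Sw nat | Rw rel nat | Rv rel nat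

fun stp :: "op \<Rightarrow> layer list \<Rightarrow> layer list option" where
  "stp (Sw i) D = swp i D" | "stp (Rw r i) D = rwr r i D" | "stp (Rv r i) D = rwr (snd r, fst r) i D"

fun runops :: "op list \<Rightarrow> layer list \<Rightarrow> layer list option" where
  "runops [] D = Some D"
| "runops (o1 # os) D = (case stp o1 D of None \<Rightarrow> None | Some D' \<Rightarrow> runops os D')"

lemma wtd_append: "wtd s (D1 @ D2) = (wtd s D1 \<and> wtd (codd s D1) D2)"
  by (induction D1 arbitrary: s) auto

lemma codd_append: "codd s (D1 @ D2) = codd (codd s D1) D2"
  by (induction D1 arbitrary: s) auto

lemma wtd_wh: "wtd p L \<Longrightarrow> wtd (xs @ p @ ys) (map (wh xs ys) L) \<and> codd (xs @ p @ ys) (map (wh xs ys) L) = xs @ codd p L @ ys"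
proof (induction L arbitrary: p)
  case Nil then show ?case by simp
next
  case (Cons x L)
  have e: "lcod (wh xs ys x) = xs @ lcod x @ ys" by (simp add: wh_def lcod_def)
  show ?case using Cons.IH[of "lcod x"] Cons.prems e by (simp add: wh_def ldom_def)
qed

locale bsmc =
  fixes C :: "('o, 'm) bmcat"
  assumes bsm: "braided_strict_monoidal C"
begin

lemmas B = bsm[unfolded braided_strict_monoidal_def]
lemmas P_id = B[THEN conjunct1]
lemmas P_comp = B[THEN conjunct2, THEN conjunct1]
lemmas P_assoc = B[THEN conjunct2, THEN conjunct2, THEN conjunct1]
lemmas P_idlaw = B[THEN conjunct2, THEN conjunct2, THEN conjunct2, THEN conjunct1]
lemmas P_tmhom = B[THEN conjunct2, THEN conjunct2, THEN conjunct2, THEN conjunct2, THEN conjunct1]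
lemmas P_tmid = B[THEN conjunct2, THEN conjunct2, THEN conjunct2, THEN conjunct2, THEN conjunct2, THEN conjunct1]
lemmas P_inter = B[THEN conjunct2, THEN conjunct2, THEN conjunct2, THEN conjunct2, THEN conjunct2, THEN conjunct2, THEN conjunct1]
lemmas P_toassoc = B[THEN conjunct2, THEN conjunct2, THEN conjunct2, THEN conjunct2, THEN conjunct2, THEN conjunct2, THEN conjunct2, THEN conjunct1]
lemmas P_tounit = B[THEN conjunct2, THEN conjunct2, THEN conjunct2, THEN conjunct2, THEN conjunct2, THEN conjunct2, THEN conjunct2, THEN conjunct2, THEN conjunct1]
lemmas P_tmassoc = B[THEN conjunct2, THEN conjunct2, THEN conjunct2, THEN conjunct2, THEN conjunct2, THEN conjunct2, THEN conjunct2, THEN conjunct2, THEN conjunct2, THEN conjunct1]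
lemmas P_tmunit = B[THEN conjunct2, THEN conjunct2, THEN conjunct2, THEN conjunct2, THEN conjunct2, THEN conjunct2, THEN conjunct2, THEN conjunct2, THEN conjunct2, THEN conjunct2, THEN conjunct1]
lemmas P_brhom = B[THEN conjunct2, THEN conjunct2, THEN conjunct2, THEN conjunct2, THEN conjunct2, THEN conjunct2, THEN conjunct2, THEN conjunct2, THEN conjunct2, THEN conjunct2, THEN conjunct2, THEN conjunct1]
lemmas P_brinv = B[THEN conjunct2, THEN conjunct2, THEN conjunct2, THEN conjunct2, THEN conjunct2, THEN conjunct2, THEN conjunct2, THEN conjunct2, THEN conjunct2, THEN conjunct2, THEN conjunct2, THEN conjunct2, THEN conjunct1]
lemmas P_brnat = B[THEN conjunct2, THEN conjunct2, THEN conjunct2, THEN conjunct2, THEN conjunct2, THEN conjunct2, THEN conjunct2, THEN conjunct2, THEN conjunct2, THEN conjunct2, THEN conjunct2, THEN conjunct2, THEN conjunct2, THEN conjunct1]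
lemmas P_hexL = B[THEN conjunct2, THEN conjunct2, THEN conjunct2, THEN conjunct2, THEN conjunct2, THEN conjunct2, THEN conjunct2, THEN conjunct2, THEN conjunct2, THEN conjunct2, THEN conjunct2, THEN conjunct2, THEN conjunct2, THEN conjunct2, THEN conjunct1]
lemmas P_hexR = B[THEN conjunct2, THEN conjunct2, THEN conjunct2, THEN conjunct2, THEN conjunct2, THEN conjunct2, THEN conjunct2, THEN conjunct2, THEN conjunct2, THEN conjunct2, THEN conjunct2, THEN conjunct2, THEN conjunct2, THEN conjunct2, THEN conjunct2]

lemma id_hom: "hom C (Id C a) a a"
  using P_id P_tmid P_toassoc P_tounit P_brhom P_brinv P_hexL P_hexR by blast

lemma comp_hom: "hom C f a b \<Longrightarrow> hom C g b c \<Longrightarrow> hom C (Cmp C g f) a c"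
  using P_id P_comp P_assoc P_idlaw P_tmhom P_inter P_tmassoc P_tmunit P_brnat unfolding hom_def by metis

lemma comp_assoc: "hom C f a b \<Longrightarrow> hom C g b c \<Longrightarrow> hom C h c d \<Longrightarrow>
   Cmp C h (Cmp C g f) = Cmp C (Cmp C h g) f"
  using P_id P_comp P_assoc P_idlaw P_tmhom P_inter P_tmassoc P_tmunit P_brnat unfolding hom_def by metis

lemma comp_id_l: "hom C f a b \<Longrightarrow> Cmp C (Id C b) f = f"
  using P_id P_comp P_assoc P_idlaw P_tmhom P_inter P_tmassoc P_tmunit P_brnat unfolding hom_def by metis

lemma comp_id_r: "hom C f a b \<Longrightarrow> Cmp C f (Id C a) = f"
  using P_id P_comp P_assoc P_idlaw P_tmhom P_inter P_tmassoc P_tmunit P_brnat unfolding hom_def by metis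

lemma tm_hom: "hom C f a b \<Longrightarrow> hom C g c d \<Longrightarrow> hom C (TM C f g) (TO C a c) (TO C b d)"
  using P_id P_comp P_assoc P_idlaw P_tmhom P_inter P_tmassoc P_tmunit P_brnat unfolding hom_def by metis

lemma tm_id: "TM C (Id C a) (Id C b) = Id C (TO C a b)"
  using P_id P_tmid P_toassoc P_tounit P_brhom P_brinv P_hexL P_hexR by blast

lemma interchange: "hom C f a b \<Longrightarrow> hom C g b c \<Longrightarrow> hom C f' a' b' \<Longrightarrow> hom C g' b' c' \<Longrightarrow>
  Cmp C (TM C g g') (TM C f f') = TM C (Cmp C g f) (Cmp C g' f')"
  using P_id P_comp P_assoc P_idlaw P_tmhom P_inter P_tmassoc P_tmunit P_brnat unfolding hom_def by metis

lemma to_assoc: "TO C (TO C a b) c = TO C a (TO C b c)"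
  using P_id P_tmid P_toassoc P_tounit P_brhom P_brinv P_hexL P_hexR by blast

lemma to_unit_l: "TO C (UnitO C) a = a"
  using P_id P_tmid P_toassoc P_tounit P_brhom P_brinv P_hexL P_hexR by blast

lemma to_unit_r: "TO C a (UnitO C) = a"
  using P_id P_tmid P_toassoc P_tounit P_brhom P_brinv P_hexL P_hexR by blast

lemma tm_assoc: "hom C f a b \<Longrightarrow> hom C g c d \<Longrightarrow> hom C h e k \<Longrightarrow>
   TM C (TM C f g) h = TM C f (TM C g h)"
  using P_id P_comp P_assoc P_idlaw P_tmhom P_inter P_tmassoc P_tmunit P_brnat unfolding hom_def by metis

lemma tm_unit_l: "hom C f a b \<Longrightarrow> TM C (Id C (UnitO C)) f = f"
  using P_id P_comp P_assoc P_idlaw P_tmhom P_inter P_tmassoc P_tmunit P_brnat unfolding hom_def by metis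

lemma tm_unit_r: "hom C f a b \<Longrightarrow> TM C f (Id C (UnitO C)) = f"
  using P_id P_comp P_assoc P_idlaw P_tmhom P_inter P_tmassoc P_tmunit P_brnat unfolding hom_def by metis

lemma br_hom: "hom C (Br C a b) (TO C a b) (TO C b a)"
  using P_id P_tmid P_toassoc P_tounit P_brhom P_brinv P_hexL P_hexR by blast

lemma br_inv: "\<exists>g. hom C g (TO C b a) (TO C a b) \<and>
        Cmp C g (Br C a b) = Id C (TO C a b) \<and> Cmp C (Br C a b) g = Id C (TO C b a)"
  using P_id P_tmid P_toassoc P_tounit P_brhom P_brinv P_hexL P_hexR by blast

lemma br_nat: "hom C f a b \<Longrightarrow> hom C g c d \<Longrightarrow>
   Cmp C (Br C b d) (TM C f g) = Cmp C (TM C g f) (Br C a c)"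
  using P_id P_comp P_assoc P_idlaw P_tmhom P_inter P_tmassoc P_tmunit P_brnat unfolding hom_def by metis

lemma hexL: "Br C a (TO C b c) = Cmp C (TM C (Id C b) (Br C a c)) (TM C (Br C a b) (Id C c))"
  using P_id P_tmid P_toassoc P_tounit P_brhom P_brinv P_hexL P_hexR by blast

lemma hexR: "Br C (TO C a b) c = Cmp C (TM C (Br C a c) (Id C b)) (TM C (Id C a) (Br C b c))"
  using P_id P_tmid P_toassoc P_tounit P_brhom P_brinv P_hexL P_hexR by blast

lemma br_unit_r: "Br C a (UnitO C) = Id C a"
proof -
  have h: "hom C (Br C a (UnitO C)) a a" using br_hom[of a "UnitO C"] by (simp add: to_unit_l to_unit_r)
  have "Br C a (UnitO C) = Cmp C (TM C (Id C (UnitO C)) (Br C a (UnitO C))) (TM C (Br C a (UnitO C)) (Id C (UnitO C)))"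
    using hexL[of a "UnitO C" "UnitO C"] by (simp add: to_unit_l)
  also have "\<dots> = Cmp C (Br C a (UnitO C)) (Br C a (UnitO C))"
    using h by (simp add: tm_unit_l tm_unit_r)
  finally have e: "Br C a (UnitO C) = Cmp C (Br C a (UnitO C)) (Br C a (UnitO C))" .
  obtain g where g: "hom C g a a" "Cmp C g (Br C a (UnitO C)) = Id C a"
    using br_inv[where a=a and b="UnitO C"] by (auto simp: to_unit_l to_unit_r)
  have "Id C a = Cmp C g (Cmp C (Br C a (UnitO C)) (Br C a (UnitO C)))" using g e by simp
  also have "\<dots> = Cmp C (Cmp C g (Br C a (UnitO C))) (Br C a (UnitO C))"
    using comp_assoc[OF h h g(1)] .
  also have "\<dots> = Br C a (UnitO C)" using g(2) comp_id_l[OF h] by simp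
  finally show ?thesis by simp
qed

lemma br_unit_l: "Br C (UnitO C) a = Id C a"
proof -
  have h: "hom C (Br C (UnitO C) a) a a" using br_hom[of "UnitO C" a] by (simp add: to_unit_l to_unit_r)
  have e: "Br C (UnitO C) a = Cmp C (Br C (UnitO C) a) (Br C (UnitO C) a)"
    using hexR[of "UnitO C" "UnitO C" a] h by (simp add: to_unit_l tm_unit_l tm_unit_r)
  obtain g where g: "hom C g a a" "Cmp C g (Br C (UnitO C) a) = Id C a"
    using br_inv[where a="UnitO C" and b=a] by (auto simp: to_unit_l to_unit_r)
  have "Id C a = Cmp C g (Cmp C (Br C (UnitO C) a) (Br C (UnitO C) a))" using g e by simp
  also have "\<dots> = Cmp C (Cmp C g (Br C (UnitO C) a)) (Br C (UnitO C) a)"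
    using comp_assoc[OF h h g(1)] .
  also have "\<dots> = Br C (UnitO C) a" using g(2) comp_id_l[OF h] by simp
  finally show ?thesis by simp
qed

end

locale hctx = bsmc C for C :: "('o, 'm) bmcat" +
  fixes A B :: 'o and muA etaA DeA epA SA act coact SB :: 'm
  assumes hopfA: "hopf_ax C A muA etaA DeA epA SA (Br C A A)"
    and ydm: "yd_mod C A muA etaA DeA epA B act coact"
    and ydS: "yd_hom C A SB act coact act coact"
    and homSB: "hom C SB B B"
begin

fun io :: "ob \<Rightarrow> 'o" where "io oA = A" | "io oB = B"

definition obs :: "ob list \<Rightarrow> 'o" where "obs l = foldr (\<lambda>x y. TO C (io x) y) l (UnitO C)"

lemma obs_Nil[simp]: "obs [] = UnitO C" by (simp add: obs_def)
lemma obs_Cons: "obs (x # l) = TO C (io x) (obs l)" by (simp add: obs_def)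
lemma obs_single[simp]: "obs [x] = io x" by (simp add: obs_def to_unit_r)
lemma obs_append: "obs (l @ r) = TO C (obs l) (obs r)"
  by (induction l) (simp_all add: obs_Cons to_unit_l to_assoc)

fun gi :: "gen \<Rightarrow> 'm" where
  "gi gM = muA" | "gi gU = etaA" | "gi gD = DeA" | "gi gE = epA" | "gi gS = SA"
| "gi gR = act" | "gi gC = coact" | "gi gT = SB" | "gi (gBr l r) = Br C (obs l) (obs r)"

lemma homs: "hom C muA (TO C A A) A" "hom C etaA (UnitO C) A" "hom C DeA A (TO C A A)"
  "hom C epA A (UnitO C)" "hom C SA A A" "hom C act (TO C B A) B" "hom C coact B (TO C B A)" "hom C SB B B"
  using hopfA ydm homSB unfolding hopf_ax_def yd_mod_def rmod_def rcomod_def by auto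

lemma obs2: "obs [x, y] = TO C (io x) (io y)" by (simp add: obs_Cons to_unit_r)

lemma gi_hom: "hom C (gi g) (obs (gdom g)) (obs (gcod g))"
  by (cases g) (simp_all add: homs obs2 to_unit_l br_hom obs_append)

definition W :: "ob list \<Rightarrow> ob list \<Rightarrow> 'm \<Rightarrow> 'm" where
  "W xs ys f = TM C (Id C (obs xs)) (TM C f (Id C (obs ys)))"

definition lay :: "layer \<Rightarrow> 'm" where "lay x = W (fst x) (snd (snd x)) (gi (fst (snd x)))"

lemma W_hom: "hom C f (obs p) (obs q) \<Longrightarrow> hom C (W xs ys f) (obs (xs @ p @ ys)) (obs (xs @ q @ ys))"
  unfolding W_def obs_append by (intro tm_hom id_hom)

lemma lay_hom: "hom C (lay x) (obs (ldom x)) (obs (lcod x))"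
  unfolding lay_def ldom_def lcod_def by (intro W_hom gi_hom)

fun ev :: "layer list \<Rightarrow> 'm \<Rightarrow> 'm" where
  "ev [] t = t" | "ev (x # xs) t = ev xs (Cmp C (lay x) t)"

definition dn :: "ob list \<Rightarrow> layer list \<Rightarrow> 'm" where "dn s D = ev D (Id C (obs s))"

lemma ev_append: "ev (D1 @ D2) t = ev D2 (ev D1 t)"
  by (induction D1 arbitrary: t) auto

lemma ev_hom: "wtd s D \<Longrightarrow> hom C t a (obs s) \<Longrightarrow> hom C (ev D t) a (obs (codd s D))"
proof (induction D arbitrary: s t)
  case Nil then show ?case by simp
next
  case (Cons x D)
  then show ?case using comp_hom[OF _ lay_hom[of x]] by auto
qed

lemma ev_comp: "wtd s D \<Longrightarrow> hom C t a (obs s) \<Longrightarrow> ev D t = Cmp C (ev D (Id C (obs s))) t"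
proof (induction D arbitrary: s t a)
  case Nil then show ?case by (simp add: comp_id_l)
next
  case (Cons x D)
  have s: "ldom x = s" "wtd (lcod x) D" using Cons.prems by auto
  have hx: "hom C (lay x) (obs s) (obs (lcod x))" using lay_hom[of x] s by simp
  have "ev (x # D) t = Cmp C (ev D (Id C (obs (lcod x)))) (Cmp C (lay x) t)"
    using Cons.IH[OF s(2) comp_hom[OF Cons.prems(2) hx]] by simp
  also have "\<dots> = Cmp C (Cmp C (ev D (Id C (obs (lcod x)))) (lay x)) t"
    by (rule comp_assoc[OF Cons.prems(2) hx ev_hom[OF s(2) id_hom]])
  also have "Cmp C (ev D (Id C (obs (lcod x)))) (lay x) = ev D (lay x)"
    using Cons.IH[OF s(2) hx] by simp
  also have "lay x = Cmp C (lay x) (Id C (obs s))" using comp_id_r[OF hx] by simp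
  finally show ?case by simp
qed

lemma dn_hom: "wtd s D \<Longrightarrow> hom C (dn s D) (obs s) (obs (codd s D))"
  unfolding dn_def by (rule ev_hom[OF _ id_hom])

lemma ev_dn: "wtd s D \<Longrightarrow> hom C t a (obs s) \<Longrightarrow> ev D t = Cmp C (dn s D) t"
  unfolding dn_def by (rule ev_comp)


lemma hom_arr: "hom C f a b \<Longrightarrow> Arr C f" by (simp add: hom_def)
lemma arr_id[simp]: "Arr C (Id C a)" using id_hom hom_arr by blast
lemma arr_tm[simp]: "Arr C f \<Longrightarrow> Arr C g \<Longrightarrow> Arr C (TM C f g)"
  using tm_hom unfolding hom_def by blast
lemma arr_gi[simp]: "Arr C (gi g)" using gi_hom hom_arr by blast
lemma tm_assoc': "Arr C f \<Longrightarrow> Arr C g \<Longrightarrow> Arr C h \<Longrightarrow> TM C (TM C f g) h = TM C f (TM C g h)"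
  using tm_assoc unfolding hom_def by blast
lemma id_obs_app: "Id C (obs (l @ r)) = TM C (Id C (obs l)) (Id C (obs r))"
  by (simp add: obs_append tm_id)

lemma W_comp: "hom C f a b \<Longrightarrow> hom C g b c \<Longrightarrow> Cmp C (W xs ys g) (W xs ys f) = W xs ys (Cmp C g f)"
  unfolding W_def
  by (subst interchange[OF id_hom id_hom tm_hom[OF _ id_hom] tm_hom[OF _ id_hom]], assumption, assumption,
      simp add: comp_id_l[OF id_hom] interchange[OF _ _ id_hom id_hom])

lemma W_id: "W xs ys (Id C (obs p)) = Id C (obs (xs @ p @ ys))"
  unfolding W_def by (simp add: tm_id obs_append)

lemma lay_wh: "lay (wh xs ys x) = W xs ys (lay x)"
  unfolding lay_def wh_def W_def by (simp add: id_obs_app tm_assoc')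

lemma ev_wh: "wtd p L \<Longrightarrow> hom C t a (obs p) \<Longrightarrow> ev (map (wh xs ys) L) (W xs ys t) = W xs ys (ev L t)"
proof (induction L arbitrary: p t)
  case Nil then show ?case by simp
next
  case (Cons x L)
  have s: "ldom x = p" "wtd (lcod x) L" using Cons.prems by auto
  have hx: "hom C (lay x) (obs p) (obs (lcod x))" using lay_hom[of x] s by simp
  have "ev (map (wh xs ys) (x # L)) (W xs ys t) = ev (map (wh xs ys) L) (W xs ys (Cmp C (lay x) t))"
    using W_comp[OF Cons.prems(2) hx] by (simp add: lay_wh)
  also have "\<dots> = W xs ys (ev L (Cmp C (lay x) t))"
    by (rule Cons.IH[OF s(2) comp_hom[OF Cons.prems(2) hx]])
  finally show ?case by simp
qed

lemma dn_wh: "wtd p L \<Longrightarrow> dn (xs @ p @ ys) (map (wh xs ys) L) = W xs ys (dn p L)"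
  unfolding dn_def W_id[symmetric] by (rule ev_wh[OF _ id_hom])

definition valid :: "rel \<Rightarrow> bool" where
  "valid r = (fst r \<noteq> [] \<and> wtd (ldom (hd (fst r))) (fst r) \<and> wtd (ldom (hd (fst r))) (snd r) \<and>
     codd (ldom (hd (fst r))) (fst r) = codd (ldom (hd (fst r))) (snd r) \<and>
     dn (ldom (hd (fst r))) (fst r) = dn (ldom (hd (fst r))) (snd r))"

lemma dn_append: "dn s (D1 @ D2) = ev D2 (dn s D1)"
  unfolding dn_def by (simp add: ev_append)

lemma rwr_ok:
  assumes v: "valid r" and w: "wtd s D" and e: "rwr r i D = Some D'"
  shows "wtd s D' \<and> codd s D' = codd s D \<and> dn s D = dn s D'"
proof -
  obtain L R where r: "r = (L, R)" by (cases r)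
  define x where "x = D ! i"
  define x0 where "x0 = hd L"
  define xs where "xs = take (length (fst x) - length (fst x0)) (fst x)"
  define ys where "ys = drop (length (snd (snd x0))) (snd (snd x))"
  define n where "n = length L"
  define p where "p = ldom x0"
  have c: "i < length D" "L \<noteq> []" "take n (drop i D) = map (wh xs ys) L"
     "D' = take i D @ map (wh xs ys) R @ drop (i + n) D"
    using e unfolding rwr_def r x_def x0_def xs_def ys_def n_def Let_def
    by (auto split: if_splits)
  have vL: "wtd p L" "wtd p R" "codd p L = codd p R" "dn p L = dn p R"
    using v unfolding valid_def r p_def x0_def by auto
  define P where "P = take i D"
  define Q where "Q = drop (i + n) D"
  have D: "D = P @ map (wh xs ys) L @ Q"
    using c(3) unfolding P_def Q_def by (metis append_take_drop_id drop_drop add.commute)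
  have wP: "wtd s P" and wM: "wtd (codd s P) (map (wh xs ys) L)"
    and wQ: "wtd (codd (codd s P) (map (wh xs ys) L)) Q"
    using w unfolding D by (auto simp: wtd_append codd_append)
  have cp: "codd s P = xs @ p @ ys"
  proof -
    obtain y L' where L: "L = y # L'" using c(2) by (cases L) auto
    have "ldom (wh xs ys y) = codd s P" using wM L by simp
    moreover have "ldom (wh xs ys y) = xs @ p @ ys" unfolding p_def x0_def L
      by (simp add: wh_def ldom_def)
    ultimately show ?thesis by simp
  qed
  have wL: "wtd (xs @ p @ ys) (map (wh xs ys) L)" "codd (xs @ p @ ys) (map (wh xs ys) L) = xs @ codd p L @ ys"
    using wtd_wh[OF vL(1)] by auto
  have wR: "wtd (xs @ p @ ys) (map (wh xs ys) R)" "codd (xs @ p @ ys) (map (wh xs ys) R) = xs @ codd p R @ ys"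
    using wtd_wh[OF vL(2)] by auto
  have hP: "hom C (dn s P) (obs s) (obs (xs @ p @ ys))" using dn_hom[OF wP] cp by simp
  have "dn s D = ev Q (ev (map (wh xs ys) L) (dn s P))" unfolding D by (simp add: dn_append ev_append)
  also have "ev (map (wh xs ys) L) (dn s P) = Cmp C (W xs ys (dn p L)) (dn s P)"
    using ev_dn[OF wL(1) hP] dn_wh[OF vL(1)] by simp
  also have "\<dots> = ev (map (wh xs ys) R) (dn s P)"
    using ev_dn[OF wR(1) hP] dn_wh[OF vL(2)] vL(4) by simp
  also have "ev Q (ev (map (wh xs ys) R) (dn s P)) = dn s D'"
    unfolding c(4) P_def[symmetric] Q_def[symmetric] by (simp add: dn_append ev_append)
  finally have eq: "dn s D = dn s D'" .
  have D'': "D' = P @ map (wh xs ys) R @ Q" unfolding c(4) P_def Q_def by simp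
  have "codd s D = xs @ codd p L @ ys \<or> True" by simp
  have "wtd s D' \<and> codd s D' = codd s D"
    using wP wQ wR wL cp vL(3) unfolding D'' using D by (simp add: wtd_append codd_append)
  then show ?thesis using eq by simp
qed

definition K :: "'o \<Rightarrow> 'm \<Rightarrow> 'o \<Rightarrow> 'm \<Rightarrow> 'o \<Rightarrow> 'm" where
  "K a f b h c = TM C (Id C a) (TM C f (TM C (Id C b) (TM C h (Id C c))))"

lemma K_comp: "hom C f1 p1 q1 \<Longrightarrow> hom C f2 q1 r1 \<Longrightarrow> hom C h1 p2 q2 \<Longrightarrow> hom C h2 q2 r2 \<Longrightarrow>
  Cmp C (K a f2 b h2 c) (K a f1 b h1 c) = K a (Cmp C f2 f1) b (Cmp C h2 h1) c"
  unfolding K_def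
  apply (subst interchange[OF id_hom id_hom], (rule tm_hom id_hom | assumption)+)
  apply (subst interchange, (rule tm_hom id_hom | assumption)+)
  apply (subst interchange[OF id_hom id_hom], (rule tm_hom id_hom | assumption)+)
  apply (subst interchange, (rule tm_hom id_hom | assumption)+)
  apply (simp add: comp_id_l[OF id_hom])
  done

lemma swp_ok:
  assumes w: "wtd s D" and e: "swp i D = Some D'"
  shows "wtd s D' \<and> codd s D' = codd s D \<and> dn s D = dn s D'"
proof -
  obtain l1 g r1 where x: "D ! i = (l1, g, r1)" by (cases "D ! i") auto
  obtain l2 h r2 where y: "D ! Suc i = (l2, h, r2)" by (cases "D ! Suc i") auto
  define P where "P = take i D"
  define Q where "Q = drop (Suc (Suc i)) D"
  have i: "Suc i < length D" using e unfolding swp_def by (auto split: if_splits)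
  have D: "D = P @ [(l1, g, r1), (l2, h, r2)] @ Q"
    unfolding P_def Q_def using i x y
    by (metis Cons_nth_drop_Suc Suc_lessD append_Cons append_Nil append_take_drop_id)
  have wP: "wtd s P" and w2: "wtd (codd s P) [(l1, g, r1), (l2, h, r2)]"
    and wQ: "wtd (codd (codd s P) [(l1, g, r1), (l2, h, r2)]) Q"
    using w unfolding D by (auto simp: wtd_append codd_append)
  have hP: "hom C (dn s P) (obs s) (obs (codd s P))" using dn_hom[OF wP] .
  have cod: "l1 @ gcod g @ r1 = l2 @ gdom h @ r2" and dm: "codd s P = l1 @ gdom g @ r1"
    using w2 by (auto simp: ldom_def lcod_def)
  have hg: "hom C (gi g) (obs (gdom g)) (obs (gcod g))" and hh: "hom C (gi h) (obs (gdom h)) (obs (gcod h))"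
    by (rule gi_hom)+
  have gen: "wtd (codd s P) [y', x'] \<and> codd (codd s P) [y', x'] = codd (codd s P) [(l1, g, r1), (l2, h, r2)]
        \<and> Cmp C (lay x') (lay y') = Cmp C (lay (l2, h, r2)) (lay (l1, g, r1))
      \<Longrightarrow> ?thesis" if D': "D' = P @ [y', x'] @ Q" for x' y'
  proof -
    assume a: "wtd (codd s P) [y', x'] \<and> codd (codd s P) [y', x'] = codd (codd s P) [(l1, g, r1), (l2, h, r2)]
        \<and> Cmp C (lay x') (lay y') = Cmp C (lay (l2, h, r2)) (lay (l1, g, r1))"
    have hx1: "hom C (lay (l1, g, r1)) (obs (codd s P)) (obs (lcod (l1, g, r1)))"
      using lay_hom[of "(l1,g,r1)"] dm by (simp add: ldom_def)
    have hy1: "hom C (lay (l2, h, r2)) (obs (lcod (l1, g, r1))) (obs (lcod (l2, h, r2)))"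
      using lay_hom[of "(l2,h,r2)"] cod by (simp add: ldom_def lcod_def)
    have wy: "ldom y' = codd s P" "ldom x' = lcod y'" using a by auto
    have hy': "hom C (lay y') (obs (codd s P)) (obs (lcod y'))" using lay_hom[of y'] wy by simp
    have hx': "hom C (lay x') (obs (lcod y')) (obs (lcod x'))" using lay_hom[of x'] wy by simp
    have "dn s D = ev Q (Cmp C (lay (l2, h, r2)) (Cmp C (lay (l1, g, r1)) (dn s P)))"
      unfolding D by (simp add: dn_append ev_append)
    also have "Cmp C (lay (l2, h, r2)) (Cmp C (lay (l1, g, r1)) (dn s P))
       = Cmp C (Cmp C (lay (l2, h, r2)) (lay (l1, g, r1))) (dn s P)"
      by (rule comp_assoc[OF hP hx1 hy1])
    also have "\<dots> = Cmp C (Cmp C (lay x') (lay y')) (dn s P)" using a by simp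
    also have "\<dots> = Cmp C (lay x') (Cmp C (lay y') (dn s P))"
      by (rule comp_assoc[OF hP hy' hx', symmetric])
    also have "ev Q \<dots> = dn s D'" unfolding D' by (simp add: dn_append ev_append)
    finally have eq: "dn s D = dn s D'" .
    have "wtd s D' \<and> codd s D' = codd s D"
      using wP wQ a unfolding D' D by (simp add: wtd_append codd_append)
    then show ?thesis using eq by simp
  qed
  show ?thesis
  proof (cases "length l1 + length (gcod g) \<le> length l2")
    case True
    define M where "M = drop (length l1 + length (gcod g)) l2"
    have cc: "l2 = l1 @ gcod g @ M \<and> r1 = M @ gdom h @ r2"
      and D': "D' = P @ [(l1 @ gdom g @ M, h, r2), (l1, g, M @ gcod h @ r2)] @ Q"
      using e True i unfolding swp_def x y M_def Let_def P_def Q_def by (auto split: if_splits)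
    show ?thesis
    proof (rule gen[OF D'])
      have k1: "lay (l1, g, r1) = K (obs l1) (gi g) (obs M) (Id C (obs (gdom h))) (obs r2)"
        using cc unfolding lay_def W_def K_def by (simp add: id_obs_app)
      have k2: "lay (l2, h, r2) = K (obs l1) (Id C (obs (gcod g))) (obs M) (gi h) (obs r2)"
        using cc unfolding lay_def W_def K_def by (simp add: id_obs_app tm_assoc')
      have k3: "lay (l1 @ gdom g @ M, h, r2) = K (obs l1) (Id C (obs (gdom g))) (obs M) (gi h) (obs r2)"
        unfolding lay_def W_def K_def by (simp add: id_obs_app tm_assoc')
      have k4: "lay (l1, g, M @ gcod h @ r2) = K (obs l1) (gi g) (obs M) (Id C (obs (gcod h))) (obs r2)"
        unfolding lay_def W_def K_def by (simp add: id_obs_app)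
      have "Cmp C (lay (l2, h, r2)) (lay (l1, g, r1)) = K (obs l1) (gi g) (obs M) (gi h) (obs r2)"
        unfolding k1 k2 by (simp add: K_comp[OF hg id_hom id_hom hh] comp_id_l[OF hg] comp_id_r[OF hh])
      moreover have "Cmp C (lay (l1, g, M @ gcod h @ r2)) (lay (l1 @ gdom g @ M, h, r2)) = K (obs l1) (gi g) (obs M) (gi h) (obs r2)"
        unfolding k3 k4 by (simp add: K_comp[OF id_hom hg hh id_hom] comp_id_r[OF hg] comp_id_l[OF hh])
      ultimately show "wtd (codd s P) [(l1 @ gdom g @ M, h, r2), (l1, g, M @ gcod h @ r2)] \<and>
        codd (codd s P) [(l1 @ gdom g @ M, h, r2), (l1, g, M @ gcod h @ r2)] = codd (codd s P) [(l1, g, r1), (l2, h, r2)] \<and>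
        Cmp C (lay (l1, g, M @ gcod h @ r2)) (lay (l1 @ gdom g @ M, h, r2)) = Cmp C (lay (l2, h, r2)) (lay (l1, g, r1))"
        using cc dm by (simp add: ldom_def lcod_def)
    qed
  next
    case False
    define M where "M = drop (length l2 + length (gdom h)) l1"
    have cc: "l1 = l2 @ gdom h @ M \<and> r2 = M @ gcod g @ r1"
      and D': "D' = P @ [(l2, h, M @ gdom g @ r1), (l2 @ gcod h @ M, g, r1)] @ Q"
      using e False i unfolding swp_def x y M_def Let_def P_def Q_def by (auto split: if_splits)
    show ?thesis
    proof (rule gen[OF D'])
      have k1: "lay (l1, g, r1) = K (obs l2) (Id C (obs (gdom h))) (obs M) (gi g) (obs r1)"
        using cc unfolding lay_def W_def K_def by (simp add: id_obs_app tm_assoc')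
      have k2: "lay (l2, h, r2) = K (obs l2) (gi h) (obs M) (Id C (obs (gcod g))) (obs r1)"
        using cc unfolding lay_def W_def K_def by (simp add: id_obs_app)
      have k3: "lay (l2, h, M @ gdom g @ r1) = K (obs l2) (gi h) (obs M) (Id C (obs (gdom g))) (obs r1)"
        unfolding lay_def W_def K_def by (simp add: id_obs_app)
      have k4: "lay (l2 @ gcod h @ M, g, r1) = K (obs l2) (Id C (obs (gcod h))) (obs M) (gi g) (obs r1)"
        unfolding lay_def W_def K_def by (simp add: id_obs_app tm_assoc')
      have "Cmp C (lay (l2, h, r2)) (lay (l1, g, r1)) = K (obs l2) (gi h) (obs M) (gi g) (obs r1)"
        unfolding k1 k2 by (simp add: K_comp[OF id_hom hh hg id_hom] comp_id_l[OF hg] comp_id_r[OF hh])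
      moreover have "Cmp C (lay (l2 @ gcod h @ M, g, r1)) (lay (l2, h, M @ gdom g @ r1)) = K (obs l2) (gi h) (obs M) (gi g) (obs r1)"
        unfolding k3 k4 by (simp add: K_comp[OF hh id_hom id_hom hg] comp_id_l[OF hh] comp_id_r[OF hg])
      ultimately show "wtd (codd s P) [(l2, h, M @ gdom g @ r1), (l2 @ gcod h @ M, g, r1)] \<and>
        codd (codd s P) [(l2, h, M @ gdom g @ r1), (l2 @ gcod h @ M, g, r1)] = codd (codd s P) [(l1, g, r1), (l2, h, r2)] \<and>
        Cmp C (lay (l2 @ gcod h @ M, g, r1)) (lay (l2, h, M @ gdom g @ r1)) = Cmp C (lay (l2, h, r2)) (lay (l1, g, r1))"
        using cc dm by (simp add: ldom_def lcod_def)
    qed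
  qed
qed

fun okop :: "op \<Rightarrow> bool" where
  "okop (Sw i) = True" | "okop (Rw r i) = valid r" | "okop (Rv r i) = (valid r \<and> snd r \<noteq> [])"

lemma valid_rev: "valid (L, R) \<Longrightarrow> R \<noteq> [] \<Longrightarrow> valid (R, L)"
  unfolding valid_def by (cases R) auto

lemma stp_ok: "okop o1 \<Longrightarrow> wtd s D \<Longrightarrow> stp o1 D = Some D' \<Longrightarrow> wtd s D' \<and> codd s D' = codd s D \<and> dn s D = dn s D'"
proof (cases o1)
  case (Sw i) then show "okop o1 \<Longrightarrow> wtd s D \<Longrightarrow> stp o1 D = Some D' \<Longrightarrow> ?thesis" using swp_ok by simp
next
  case (Rw r i) then show "okop o1 \<Longrightarrow> wtd s D \<Longrightarrow> stp o1 D = Some D' \<Longrightarrow> ?thesis" using rwr_ok by simp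
next
  case (Rv r i)
  then show "okop o1 \<Longrightarrow> wtd s D \<Longrightarrow> stp o1 D = Some D' \<Longrightarrow> ?thesis"
    using rwr_ok[of "(snd r, fst r)"] valid_rev[of "fst r" "snd r"] by simp
qed

lemma runops_ok: "list_all okop os \<Longrightarrow> wtd s D \<Longrightarrow> runops os D = Some D' \<Longrightarrow> wtd s D' \<and> dn s D = dn s D'"
proof (induction os arbitrary: D)
  case Nil then show ?case by simp
next
  case (Cons o1 os)
  obtain D1 where d1: "stp o1 D = Some D1" and r: "runops os D1 = Some D'"
    using Cons.prems(3) by (auto split: option.splits)
  have "wtd s D1 \<and> dn s D = dn s D1" using stp_ok[OF _ Cons.prems(2) d1] Cons.prems(1) by simp
  then show ?case using Cons.IH[OF _ _ r] Cons.prems(1) by simp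
qed

lemma chain: "list_all okop os \<Longrightarrow> wtd s D \<Longrightarrow> runops os D = Some D' \<Longrightarrow> dn s D = dn s D'"
  using runops_ok by blast


lemma tm_unit_l'[simp]: "Arr C f \<Longrightarrow> TM C (Id C (UnitO C)) f = f"
  using tm_unit_l unfolding hom_def by blast
lemma tm_unit_r'[simp]: "Arr C f \<Longrightarrow> TM C f (Id C (UnitO C)) = f"
  using tm_unit_r unfolding hom_def by blast

lemma dn_cons: "ldom x = s \<Longrightarrow> dn s (x # D) = ev D (lay x)"
  unfolding dn_def using comp_id_r[OF lay_hom[of x]] by simp

lemma io_simps[simp]: "io oA = A" "io oB = B" by simp_all

lemma arrs[simp]: "Arr C muA" "Arr C etaA" "Arr C DeA" "Arr C epA" "Arr C SA" "Arr C act" "Arr C coact" "Arr C SB"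
  "Arr C (Br C a b)"
  using homs br_hom hom_arr by blast+

lemma dom_id[simp]: "Dom C (Id C a) = a" and cod_id[simp]: "Cod C (Id C a) = a"
  using id_hom unfolding hom_def by auto
lemma dom_tm[simp]: "Arr C f \<Longrightarrow> Arr C g \<Longrightarrow> Dom C (TM C f g) = TO C (Dom C f) (Dom C g)"
  and cod_tm[simp]: "Arr C f \<Longrightarrow> Arr C g \<Longrightarrow> Cod C (TM C f g) = TO C (Cod C f) (Cod C g)"
  using tm_hom unfolding hom_def by auto
lemma arr_cmp[simp]: "Arr C f \<Longrightarrow> Arr C g \<Longrightarrow> Dom C g = Cod C f \<Longrightarrow> Arr C (Cmp C g f)"
  and dom_cmp[simp]: "Arr C f \<Longrightarrow> Arr C g \<Longrightarrow> Dom C g = Cod C f \<Longrightarrow> Dom C (Cmp C g f) = Dom C f"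
  and cod_cmp[simp]: "Arr C f \<Longrightarrow> Arr C g \<Longrightarrow> Dom C g = Cod C f \<Longrightarrow> Cod C (Cmp C g f) = Cod C g"
  using comp_hom unfolding hom_def by auto
lemma cmp_assoc': "Arr C f \<Longrightarrow> Arr C g \<Longrightarrow> Arr C h \<Longrightarrow> Dom C g = Cod C f \<Longrightarrow> Dom C h = Cod C g \<Longrightarrow>
   Cmp C (Cmp C h g) f = Cmp C h (Cmp C g f)"
  using comp_assoc unfolding hom_def by metis
lemma domcod_gen[simp]: "Dom C muA = TO C A A" "Cod C muA = A" "Dom C etaA = UnitO C" "Cod C etaA = A"
  "Dom C DeA = A" "Cod C DeA = TO C A A" "Dom C epA = A" "Cod C epA = UnitO C" "Dom C SA = A" "Cod C SA = A"
  "Dom C act = TO C B A" "Cod C act = B" "Dom C coact = B" "Cod C coact = TO C B A" "Dom C SB = B" "Cod C SB = B"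
  "Dom C (Br C a b) = TO C a b" "Cod C (Br C a b) = TO C b a"
  using homs br_hom unfolding hom_def by auto
lemma tm_split1: "Arr C f \<Longrightarrow> Arr C g \<Longrightarrow> TM C f g = Cmp C (TM C (Id C (Cod C f)) g) (TM C f (Id C (Dom C g)))"
  using interchange[of f "Dom C f" "Cod C f" "Id C (Cod C f)" "Cod C f" "Id C (Dom C g)" "Dom C g" "Dom C g" g "Cod C g"]
  by (simp add: hom_def comp_id_l comp_id_r id_hom)
lemma tm_split2: "Arr C f \<Longrightarrow> Arr C g \<Longrightarrow> TM C f g = Cmp C (TM C f (Id C (Cod C g))) (TM C (Id C (Dom C f)) g)"
  using interchange[of "Id C (Dom C f)" "Dom C f" "Dom C f" f "Cod C f" g "Dom C g" "Cod C g" "Id C (Cod C g)" "Cod C g"]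
  by (simp add: hom_def comp_id_l comp_id_r id_hom)

lemma tm_id_cmp: "Arr C f \<Longrightarrow> Arr C g \<Longrightarrow> Dom C g = Cod C f \<Longrightarrow>
   TM C (Id C a) (Cmp C g f) = Cmp C (TM C (Id C a) g) (TM C (Id C a) f)"
  using interchange[of "Id C a" a a "Id C a" a f "Dom C f" "Cod C f" g "Cod C g"]
  by (simp add: hom_def comp_id_l id_hom)
lemma tm_cmp_id: "Arr C f \<Longrightarrow> Arr C g \<Longrightarrow> Dom C g = Cod C f \<Longrightarrow>
   TM C (Cmp C g f) (Id C a) = Cmp C (TM C g (Id C a)) (TM C f (Id C a))"
  using interchange[of f "Dom C f" "Cod C f" g "Cod C g" "Id C a" a a "Id C a" a]
  by (simp add: hom_def comp_id_l id_hom)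

lemmas dc = tm_id_cmp tm_cmp_id arr_cmp dom_cmp cod_cmp cmp_assoc'

lemma dn_Nil: "dn s [] = Id C (obs s)" by (simp add: dn_def)

lemmas tr = dn_Nil dn_cons ev.simps lay_def W_def obs_Cons to_unit_l to_unit_r id_obs_app tm_assoc' to_assoc
   ldom_def lcod_def

end


definition "rAss = ([([],gM,[oA]),([],gM,[])], [([oA],gM,[]),([],gM,[])])"
definition "rUL = ([([],gU,[oA]),([],gM,[])], [])"
definition "rUR = ([([oA],gU,[]),([],gM,[])], [])"
definition "rCoass = ([([],gD,[]),([],gD,[oA])], [([],gD,[]),([oA],gD,[])])"
definition "rCUL = ([([],gD,[]),([],gE,[oA])], [])"
definition "rCUR = ([([],gD,[]),([oA],gE,[])], [])"
definition "rBi = ([([],gM,[]),([],gD,[])], [([],gD,[oA]),([oA,oA],gD,[]),([oA],gBr [oA] [oA],[oA]),([],gM,[oA,oA]),([oA],gM,[])])"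
definition "rDU = ([([],gU,[]),([],gD,[])], [([],gU,[]),([oA],gU,[])])"
definition "rEM = ([([],gM,[]),([],gE,[])], [([],gE,[oA]),([],gE,[])])"
definition "rEU = ([([],gU,[]),([],gE,[])], [])"
definition "rAntL = ([([],gD,[]),([],gS,[oA]),([],gM,[])], [([],gE,[]),([],gU,[])])"
definition "rAntR = ([([],gD,[]),([oA],gS,[]),([],gM,[])], [([],gE,[]),([],gU,[])])"
definition "rRass = ([([],gR,[oA]),([],gR,[])], [([oB],gM,[]),([],gR,[])])"
definition "rRU = ([([oB],gU,[]),([],gR,[])], [])"
definition "rCass = ([([],gC,[]),([],gC,[oA])], [([],gC,[]),([oB],gD,[])])"
definition "rCU = ([([],gC,[]),([oB],gE,[])], [])"
definition "rYD = ([([oB],gD,[]),([],gBr [oB] [oA],[oA]),([oA],gR,[]),([oA],gC,[]),([],gBr [oA] [oB],[oA]),([oB],gM,[])],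
   [([],gC,[oA]),([oB,oA],gD,[]),([oB],gBr [oA] [oA],[oA]),([],gR,[oA,oA]),([oB],gM,[])])"
definition "rTR = ([([],gR,[]),([],gT,[])], [([],gT,[oA]),([],gR,[])])"
definition "rTC = ([([],gT,[]),([],gC,[])], [([],gC,[]),([],gT,[oA])])"
definition "natL g Y = ([([],g,Y),([],gBr (gcod g) Y,[])], [([],gBr (gdom g) Y,[]),(Y,g,[])])"
definition "natR g X = ([(X,g,[]),([],gBr X (gcod g),[])], [([],gBr X (gdom g),[]),([],g,X)])"
definition "hexL X Y1 Y2 = ([([],gBr X (Y1@Y2),[])], [([],gBr X Y1,Y2),(Y1,gBr X Y2,[])])"
definition "hexR X1 X2 Y = ([([],gBr (X1@X2) Y,[])], [(X1,gBr X2 Y,[]),([],gBr X1 Y,X2)])"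
definition "brU X = ([([],gBr X [],[])], [])"
definition "brUL X = ([([],gBr [] X,[])], [])"
definition "natRw X l g r = ([(X@l,g,r),([],gBr X (l@gcod g@r),[])], [([],gBr X (l@gdom g@r),[]),(l,g,r@X)])"
definition "natLw l g r Y = ([(l,g,r@Y),([],gBr (l@gcod g@r) Y,[])], [([],gBr (l@gdom g@r) Y,[]),(Y@l,g,r)])"

named_theorems vals and rnes and rdefs
declare rAss_def[rdefs] rUL_def[rdefs] rUR_def[rdefs] rCoass_def[rdefs] rCUL_def[rdefs] rCUR_def[rdefs]
  rBi_def[rdefs] rDU_def[rdefs] rEM_def[rdefs] rEU_def[rdefs] rAntL_def[rdefs] rAntR_def[rdefs]
  rRass_def[rdefs] rRU_def[rdefs] rCass_def[rdefs] rCU_def[rdefs] rYD_def[rdefs] rTR_def[rdefs] rTC_def[rdefs]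
  natL_def[rdefs] natR_def[rdefs] natRw_def[rdefs] natLw_def[rdefs] hexL_def[rdefs] hexR_def[rdefs] brU_def[rdefs] brUL_def[rdefs]

lemma rnes0[rnes]: "snd rAss \<noteq> []" "snd rCoass \<noteq> []" "snd rBi \<noteq> []" "snd rDU \<noteq> []" "snd rEM \<noteq> []"
  "snd rAntL \<noteq> []" "snd rAntR \<noteq> []" "snd rRass \<noteq> []" "snd rCass \<noteq> []" "snd rYD \<noteq> []"
  "snd rTR \<noteq> []" "snd rTC \<noteq> []" "snd (natL g Y) \<noteq> []" "snd (natR g X) \<noteq> []"
  "snd (hexL X Y1 Y2) \<noteq> []" "snd (natRw X l g r) \<noteq> []" "snd (natLw l g r Y) \<noteq> []" "snd (hexR X1 X2 Y) \<noteq> []"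
  by (simp_all add: rdefs)

context hctx
begin

lemmas HA = hopfA[unfolded hopf_ax_def]
lemmas YM = ydm[unfolded yd_mod_def rmod_def rcomod_def]
lemmas YS = ydS[unfolded yd_hom_def]

lemma v_rAss[vals]: "valid rAss" unfolding valid_def rAss_def by (simp add: tr HA)
lemma v_rUL[vals]: "valid rUL" unfolding valid_def rUL_def by (simp add: tr HA)
lemma v_rUR[vals]: "valid rUR" unfolding valid_def rUR_def by (simp add: tr HA)
lemma v_rCoass[vals]: "valid rCoass" unfolding valid_def rCoass_def by (simp add: tr HA)
lemma v_rCUL[vals]: "valid rCUL" unfolding valid_def rCUL_def by (simp add: tr HA)
lemma v_rCUR[vals]: "valid rCUR" unfolding valid_def rCUR_def by (simp add: tr HA)
lemma v_rEU[vals]: "valid rEU" unfolding valid_def rEU_def by (simp add: tr HA)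
lemma v_rAntL[vals]: "valid rAntL" unfolding valid_def rAntL_def by (simp add: tr HA)
lemma v_rAntR[vals]: "valid rAntR" unfolding valid_def rAntR_def by (simp add: tr HA)
lemma v_rRass[vals]: "valid rRass" unfolding valid_def rRass_def by (simp add: tr YM)
lemma v_rRU[vals]: "valid rRU" unfolding valid_def rRU_def by (simp add: tr YM)
lemma v_rCass[vals]: "valid rCass" unfolding valid_def rCass_def by (simp add: tr YM)
lemma v_rCU[vals]: "valid rCU" unfolding valid_def rCU_def by (simp add: tr YM)
lemma v_rTR[vals]: "valid rTR" unfolding valid_def rTR_def by (simp add: tr YS)
lemma v_rTC[vals]: "valid rTC" unfolding valid_def rTC_def by (simp add: tr YS)

lemma v_rBi[vals]: "valid rBi" unfolding valid_def rBi_def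
  by (simp add: tr dc HA tm_split1[of muA muA] tm_split1[of DeA DeA])
lemma v_rDU[vals]: "valid rDU" unfolding valid_def rDU_def
  by (simp add: tr dc HA tm_split1[of etaA etaA])
lemma v_rEM[vals]: "valid rEM" unfolding valid_def rEM_def
  by (simp add: tr dc HA tm_split1[of epA epA])
lemma v_rYD[vals]: "valid rYD" unfolding valid_def rYD_def
  using YM by (simp add: tr dc tm_split1[of act muA] tm_split1[of coact DeA])

lemma v_natL[vals]: "valid (natL g Y)" unfolding valid_def natL_def
  by (simp add: tr dc br_nat[OF gi_hom id_hom])
lemma v_natR[vals]: "valid (natR g X)" unfolding valid_def natR_def
  by (simp add: tr dc br_nat[OF id_hom gi_hom])
lemma v_hexL[vals]: "valid (hexL X Y1 Y2)" unfolding valid_def hexL_def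
  by (simp add: tr dc obs_append hexL)
lemma v_hexR[vals]: "valid (hexR X1 X2 Y)" unfolding valid_def hexR_def
  by (simp add: tr dc obs_append hexR)
lemma v_brU[vals]: "valid (brU X)" unfolding valid_def brU_def
  by (simp add: tr dc br_unit_r)
lemma W_app_l: "Arr C f \<Longrightarrow> W (X @ l) r f = TM C (Id C (obs X)) (W l r f)"
  unfolding W_def by (simp add: id_obs_app tm_assoc')
lemma W_app_r: "Arr C f \<Longrightarrow> W l (r @ X) f = TM C (W l r f) (Id C (obs X))"
  unfolding W_def by (simp add: id_obs_app tm_assoc')
lemma W_nil: "Arr C f \<Longrightarrow> W [] [] f = f"
  unfolding W_def by simp
lemma W_hom': "hom C (W l r (gi g)) (obs (l @ gdom g @ r)) (obs (l @ gcod g @ r))"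
  by (rule W_hom[OF gi_hom])
lemma v_natRw[vals]: "valid (natRw X l g r)" unfolding valid_def natRw_def
  using br_nat[OF id_hom W_hom', of "obs X" l g r]
  by (simp add: ldom_def lcod_def dn_cons lay_def W_app_l W_app_r W_nil hom_arr[OF W_hom'])
lemma v_natLw[vals]: "valid (natLw l g r Y)" unfolding valid_def natLw_def
  using br_nat[OF W_hom' id_hom, of l g r "obs Y"]
  by (simp add: ldom_def lcod_def dn_cons lay_def W_app_l W_app_r W_nil hom_arr[OF W_hom'])
lemma v_brUL[vals]: "valid (brUL X)" unfolding valid_def brUL_def
  by (simp add: tr dc br_unit_l)




definition "rCoAA = ([([],gD,[oA]), ([oA,oA],gD,[]), ([oA],(gBr [oA] [oA]),[oA]), ([oA,oA],gD,[oA]), ([oA,oA,oA,oA],gD,[]), ([oA,oA,oA],(gBr [oA] [oA]),[oA])], [([],gD,[oA]), ([oA,oA],gD,[]), ([oA],(gBr [oA] [oA]),[oA]), ([],gD,[oA,oA,oA]), ([oA,oA],gD,[oA,oA]), ([oA],(gBr [oA] [oA]),[oA,oA,oA])])"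
lemma v_rCoAA[vals]: "valid rCoAA"
proof -
  have c0: "dn [oA,oA] [([],gD,[oA]), ([oA,oA],gD,[]), ([oA],(gBr [oA] [oA]),[oA]), ([oA,oA],gD,[oA]), ([oA,oA,oA,oA],gD,[]), ([oA,oA,oA],(gBr [oA] [oA]),[oA])] = dn [oA,oA] [([],gD,[oA]), ([oA],gD,[oA]), ([oA,oA,oA],gD,[]), ([oA,oA,oA,oA],gD,[]), ([oA,oA],(gBr [oA] [oA]),[oA,oA]), ([oA],(gBr [oA] [oA]),[oA,oA,oA]), ([oA,oA,oA],(gBr [oA] [oA]),[oA])]"
    by (rule chain[of "[Rv (natL gD [oA]) 2, Rw (hexR [oA] [oA] [oA]) 3, Sw 4, Sw 3, Sw 2, Sw 2, Sw 1]"]) (simp add: vals rnes, simp add: ldom_def lcod_def, simp add: rdefs rwr_def swp_def wh_def Let_def)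
  have c1: "dn [oA,oA] [([],gD,[oA]), ([oA,oA],gD,[]), ([oA],(gBr [oA] [oA]),[oA]), ([],gD,[oA,oA,oA]), ([oA,oA],gD,[oA,oA]), ([oA],(gBr [oA] [oA]),[oA,oA,oA])] = dn [oA,oA] [([],gD,[oA]), ([oA],gD,[oA]), ([oA,oA,oA],gD,[]), ([oA,oA,oA,oA],gD,[]), ([oA,oA],(gBr [oA] [oA]),[oA,oA]), ([oA],(gBr [oA] [oA]),[oA,oA,oA]), ([oA,oA,oA],(gBr [oA] [oA]),[oA])]"
    by (rule chain[of "[Sw 2, Sw 1, Rw rCoass 0, Rv (natR gD [oA]) 3, Rw (hexL [oA] [oA] [oA]) 4, Rw rCoass 2, Sw 5]"]) (simp add: vals rnes, simp add: ldom_def lcod_def, simp add: rdefs rwr_def swp_def wh_def Let_def)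
  have e: "dn [oA,oA] [([],gD,[oA]), ([oA,oA],gD,[]), ([oA],(gBr [oA] [oA]),[oA]), ([oA,oA],gD,[oA]), ([oA,oA,oA,oA],gD,[]), ([oA,oA,oA],(gBr [oA] [oA]),[oA])] = dn [oA,oA] [([],gD,[oA]), ([oA,oA],gD,[]), ([oA],(gBr [oA] [oA]),[oA]), ([],gD,[oA,oA,oA]), ([oA,oA],gD,[oA,oA]), ([oA],(gBr [oA] [oA]),[oA,oA,oA])]" using c0 c1 by metis
  show ?thesis unfolding valid_def rCoAA_def using e by (simp add: ldom_def lcod_def)
qed
declare rCoAA_def[rdefs]
lemma [rnes]: "snd rCoAA \<noteq> []" by (simp add: rCoAA_def)

definition "rH1 = ([([],gD,[oA]), ([oA,oA],gD,[]), ([oA],(gBr [oA] [oA]),[oA]), ([],gM,[oA,oA]), ([oA],gS,[oA]), ([oA,oA],gS,[]), ([oA],(gBr [oA] [oA]),[]), ([oA],gM,[]), ([],gM,[])], [([oA],gE,[]), ([],gE,[]), ([],gU,[])])"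
lemma v_rH1[vals]: "valid rH1"
proof -
  have c0: "dn [oA,oA] [([],gD,[oA]), ([oA,oA],gD,[]), ([oA],(gBr [oA] [oA]),[oA]), ([],gM,[oA,oA]), ([oA],gS,[oA]), ([oA,oA],gS,[]), ([oA],(gBr [oA] [oA]),[]), ([oA],gM,[]), ([],gM,[])] = dn [oA,oA] [([oA],gE,[]), ([],gE,[]), ([],gU,[])]"
    by (rule chain[of "[Sw 3, Rv (natL gS [oA]) 2, Sw 4, Sw 3, Sw 5, Rv (hexL [oA] [oA] [oA]) 4, Sw 5, Rw rAss 6, Rv rAss 5, Rv (natR gM [oA]) 4, Sw 1, Rw rAntR 2, Rw (natR gU [oA]) 3, Rw (brU [oA]) 3, Rw rUL 3, Sw 1, Sw 0, Rw rAntR 1]"]) (simp add: vals rnes, simp add: ldom_def lcod_def, simp add: rdefs rwr_def swp_def wh_def Let_def)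
  have e: "dn [oA,oA] [([],gD,[oA]), ([oA,oA],gD,[]), ([oA],(gBr [oA] [oA]),[oA]), ([],gM,[oA,oA]), ([oA],gS,[oA]), ([oA,oA],gS,[]), ([oA],(gBr [oA] [oA]),[]), ([oA],gM,[]), ([],gM,[])] = dn [oA,oA] [([oA],gE,[]), ([],gE,[]), ([],gU,[])]" using c0 by metis
  show ?thesis unfolding valid_def rH1_def using e by (simp add: ldom_def lcod_def)
qed
declare rH1_def[rdefs]
lemma [rnes]: "snd rH1 \<noteq> []" by (simp add: rH1_def)

definition "rH2 = ([([],gD,[oA]), ([oA,oA],gD,[]), ([oA],(gBr [oA] [oA]),[oA]), ([],gM,[oA,oA]), ([],gS,[oA,oA]), ([oA],gM,[]), ([],gM,[])], [([oA],gE,[]), ([],gE,[]), ([],gU,[])])"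
lemma v_rH2[vals]: "valid rH2"
proof -
  have c0: "dn [oA,oA] [([],gD,[oA]), ([oA,oA],gD,[]), ([oA],(gBr [oA] [oA]),[oA]), ([],gM,[oA,oA]), ([],gS,[oA,oA]), ([oA],gM,[]), ([],gM,[])] = dn [oA,oA] [([oA],gE,[]), ([],gE,[]), ([],gU,[])]"
    by (rule chain[of "[Sw 4, Rv rBi 0, Rw rAntL 1, Rw rEM 0, Sw 0]"]) (simp add: vals rnes, simp add: ldom_def lcod_def, simp add: rdefs rwr_def swp_def wh_def Let_def)
  have e: "dn [oA,oA] [([],gD,[oA]), ([oA,oA],gD,[]), ([oA],(gBr [oA] [oA]),[oA]), ([],gM,[oA,oA]), ([],gS,[oA,oA]), ([oA],gM,[]), ([],gM,[])] = dn [oA,oA] [([oA],gE,[]), ([],gE,[]), ([],gU,[])]" using c0 by metis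
  show ?thesis unfolding valid_def rH2_def using e by (simp add: ldom_def lcod_def)
qed
declare rH2_def[rdefs]
lemma [rnes]: "snd rH2 \<noteq> []" by (simp add: rH2_def)

definition "rSm = ([([],gM,[]), ([],gS,[])], [([],gS,[oA]), ([oA],gS,[]), ([],(gBr [oA] [oA]),[]), ([],gM,[])])"
lemma v_rSm[vals]: "valid rSm"
proof -
  have c0: "dn [oA,oA] [([],gD,[oA]), ([oA,oA],gD,[]), ([oA],(gBr [oA] [oA]),[oA]), ([oA,oA],gD,[oA]), ([oA,oA,oA,oA],gD,[]), ([oA,oA,oA],(gBr [oA] [oA]),[oA]), ([],gM,[oA,oA,oA,oA]), ([],gS,[oA,oA,oA,oA]), ([oA],gM,[oA,oA]), ([oA,oA],gS,[oA]), ([oA,oA,oA],gS,[]), ([oA,oA],(gBr [oA] [oA]),[]), ([oA,oA],gM,[]), ([oA],gM,[]), ([],gM,[])] = dn [oA,oA] [([],gM,[]), ([],gS,[])]"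
    by (rule chain[of "[Sw 7, Sw 8, Sw 9, Sw 10, Sw 11, Sw 12, Sw 6, Sw 7, Sw 8, Sw 9, Sw 10, Sw 11, Rw rH1 3, Sw 5, Sw 6, Rw rUR 7, Sw 2, Rw rCUR 1, Rv (natL gE [oA]) 1, Rw (brUL [oA]) 2, Rw rCUR 0]"]) (simp add: vals rnes, simp add: ldom_def lcod_def, simp add: rdefs rwr_def swp_def wh_def Let_def)
  have c1: "dn [oA,oA] [([],gD,[oA]), ([oA,oA],gD,[]), ([oA],(gBr [oA] [oA]),[oA]), ([oA,oA],gD,[oA]), ([oA,oA,oA,oA],gD,[]), ([oA,oA,oA],(gBr [oA] [oA]),[oA]), ([],gM,[oA,oA,oA,oA]), ([],gS,[oA,oA,oA,oA]), ([oA],gM,[oA,oA]), ([oA,oA],gS,[oA]), ([oA,oA,oA],gS,[]), ([oA,oA],(gBr [oA] [oA]),[]), ([oA,oA],gM,[]), ([oA],gM,[]), ([],gM,[])] = dn [oA,oA] [([],gS,[oA]), ([oA],gS,[]), ([],(gBr [oA] [oA]),[]), ([],gM,[])]"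
    by (rule chain[of "[Rw rCoAA 0, Rv rAss 13, Sw 12, Sw 11, Sw 10, Sw 9, Rw rH2 3, Sw 5, Sw 6, Sw 7, Sw 8, Rw rUL 9, Rv (natR gE [oA]) 2, Rw (brU [oA]) 3, Rw rCUL 1, Rw rCUL 0]"]) (simp add: vals rnes, simp add: ldom_def lcod_def, simp add: rdefs rwr_def swp_def wh_def Let_def)
  have e: "dn [oA,oA] [([],gM,[]), ([],gS,[])] = dn [oA,oA] [([],gS,[oA]), ([oA],gS,[]), ([],(gBr [oA] [oA]),[]), ([],gM,[])]" using c0 c1 by metis
  show ?thesis unfolding valid_def rSm_def using e by (simp add: ldom_def lcod_def)
qed
declare rSm_def[rdefs]
lemma [rnes]: "snd rSm \<noteq> []" by (simp add: rSm_def)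

definition "rH1b = ([([],gD,[]), ([],gD,[oA]), ([],(gBr [oA] [oA]),[oA]), ([],gS,[oA,oA]), ([oA],gS,[oA]), ([oA,oA],gD,[]), ([oA],(gBr [oA] [oA]),[oA]), ([],gM,[oA,oA]), ([oA],gM,[])], [([],gE,[]), ([],gU,[]), ([oA],gU,[])])"
lemma v_rH1b[vals]: "valid rH1b"
proof -
  have c0: "dn [oA] [([],gD,[]), ([],gD,[oA]), ([],(gBr [oA] [oA]),[oA]), ([],gS,[oA,oA]), ([oA],gS,[oA]), ([oA,oA],gD,[]), ([oA],(gBr [oA] [oA]),[oA]), ([],gM,[oA,oA]), ([oA],gM,[])] = dn [oA] [([],gE,[]), ([],gU,[]), ([oA],gU,[])]"
    by (rule chain[of "[Sw 4, Sw 3, Rw (natL gS [oA]) 5, Sw 4, Sw 2, Rv (hexL [oA] [oA] [oA]) 3, Sw 1, Rv rCoass 0, Rw rCoass 1, Rw (natR gD [oA]) 2, Sw 4, Sw 3, Rw rAntL 4, Sw 3, Rv (natR gE [oA]) 2, Rw (brU [oA]) 3, Rw rCUR 1, Sw 2, Rw rAntL 0, Sw 1]"]) (simp add: vals rnes, simp add: ldom_def lcod_def, simp add: rdefs rwr_def swp_def wh_def Let_def)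
  have e: "dn [oA] [([],gD,[]), ([],gD,[oA]), ([],(gBr [oA] [oA]),[oA]), ([],gS,[oA,oA]), ([oA],gS,[oA]), ([oA,oA],gD,[]), ([oA],(gBr [oA] [oA]),[oA]), ([],gM,[oA,oA]), ([oA],gM,[])] = dn [oA] [([],gE,[]), ([],gU,[]), ([oA],gU,[])]" using c0 by metis
  show ?thesis unfolding valid_def rH1b_def using e by (simp add: ldom_def lcod_def)
qed
declare rH1b_def[rdefs]
lemma [rnes]: "snd rH1b \<noteq> []" by (simp add: rH1b_def)

definition "rH2b = ([([],gD,[]), ([oA],gS,[]), ([],gD,[oA]), ([oA,oA],gD,[]), ([oA],(gBr [oA] [oA]),[oA]), ([],gM,[oA,oA]), ([oA],gM,[])], [([],gE,[]), ([],gU,[]), ([oA],gU,[])])"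
lemma v_rH2b[vals]: "valid rH2b"
proof -
  have c0: "dn [oA] [([],gD,[]), ([oA],gS,[]), ([],gD,[oA]), ([oA,oA],gD,[]), ([oA],(gBr [oA] [oA]),[oA]), ([],gM,[oA,oA]), ([oA],gM,[])] = dn [oA] [([],gE,[]), ([],gU,[]), ([oA],gU,[])]"
    by (rule chain[of "[Rv rBi 2, Rw rAntR 0, Rw rDU 1]"]) (simp add: vals rnes, simp add: ldom_def lcod_def, simp add: rdefs rwr_def swp_def wh_def Let_def)
  have e: "dn [oA] [([],gD,[]), ([oA],gS,[]), ([],gD,[oA]), ([oA,oA],gD,[]), ([oA],(gBr [oA] [oA]),[oA]), ([],gM,[oA,oA]), ([oA],gM,[])] = dn [oA] [([],gE,[]), ([],gU,[]), ([oA],gU,[])]" using c0 by metis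
  show ?thesis unfolding valid_def rH2b_def using e by (simp add: ldom_def lcod_def)
qed
declare rH2b_def[rdefs]
lemma [rnes]: "snd rH2b \<noteq> []" by (simp add: rH2b_def)

definition "rAssAA = ([([oA],(gBr [oA] [oA]),[oA,oA,oA]), ([],gM,[oA,oA,oA,oA]), ([oA],gM,[oA,oA]), ([oA],(gBr [oA] [oA]),[oA]), ([],gM,[oA,oA]), ([oA],gM,[])], [([oA,oA,oA],(gBr [oA] [oA]),[oA]), ([oA,oA],gM,[oA,oA]), ([oA,oA,oA],gM,[]), ([oA],(gBr [oA] [oA]),[oA]), ([],gM,[oA,oA]), ([oA],gM,[])])"
lemma v_rAssAA[vals]: "valid rAssAA"
proof -
  have c0: "dn [oA,oA,oA,oA,oA,oA] [([oA],(gBr [oA] [oA]),[oA,oA,oA]), ([],gM,[oA,oA,oA,oA]), ([oA],gM,[oA,oA]), ([oA],(gBr [oA] [oA]),[oA]), ([],gM,[oA,oA]), ([oA],gM,[])] = dn [oA,oA,oA,oA,oA,oA] [([oA],(gBr [oA] [oA]),[oA,oA,oA]), ([oA,oA,oA],(gBr [oA] [oA]),[oA]), ([oA,oA],(gBr [oA] [oA]),[oA,oA]), ([oA,oA,oA,oA],gM,[]), ([oA],gM,[oA,oA]), ([],gM,[oA,oA]), ([oA],gM,[])]"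
    by (rule chain[of "[Rw (natL gM [oA]) 2, Rw (hexR [oA] [oA] [oA]) 2, Sw 1, Sw 2, Sw 4, Rw rAss 3, Rw rAss 5, Sw 4, Sw 3]"]) (simp add: vals rnes, simp add: ldom_def lcod_def, simp add: rdefs rwr_def swp_def wh_def Let_def)
  have c1: "dn [oA,oA,oA,oA,oA,oA] [([oA,oA,oA],(gBr [oA] [oA]),[oA]), ([oA,oA],gM,[oA,oA]), ([oA,oA,oA],gM,[]), ([oA],(gBr [oA] [oA]),[oA]), ([],gM,[oA,oA]), ([oA],gM,[])] = dn [oA,oA,oA,oA,oA,oA] [([oA],(gBr [oA] [oA]),[oA,oA,oA]), ([oA,oA,oA],(gBr [oA] [oA]),[oA]), ([oA,oA],(gBr [oA] [oA]),[oA,oA]), ([oA,oA,oA,oA],gM,[]), ([oA],gM,[oA,oA]), ([],gM,[oA,oA]), ([oA],gM,[])]"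
    by (rule chain[of "[Sw 1, Rw (natR gM [oA]) 2, Sw 1, Rw (hexL [oA] [oA] [oA]) 1, Sw 0]"]) (simp add: vals rnes, simp add: ldom_def lcod_def, simp add: rdefs rwr_def swp_def wh_def Let_def)
  have e: "dn [oA,oA,oA,oA,oA,oA] [([oA],(gBr [oA] [oA]),[oA,oA,oA]), ([],gM,[oA,oA,oA,oA]), ([oA],gM,[oA,oA]), ([oA],(gBr [oA] [oA]),[oA]), ([],gM,[oA,oA]), ([oA],gM,[])] = dn [oA,oA,oA,oA,oA,oA] [([oA,oA,oA],(gBr [oA] [oA]),[oA]), ([oA,oA],gM,[oA,oA]), ([oA,oA,oA],gM,[]), ([oA],(gBr [oA] [oA]),[oA]), ([],gM,[oA,oA]), ([oA],gM,[])]" using c0 c1 by metis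
  show ?thesis unfolding valid_def rAssAA_def using e by (simp add: ldom_def lcod_def)
qed
declare rAssAA_def[rdefs]
lemma [rnes]: "snd rAssAA \<noteq> []" by (simp add: rAssAA_def)

definition "rDS = ([([],gS,[]), ([],gD,[])], [([],gD,[]), ([],(gBr [oA] [oA]),[]), ([],gS,[oA]), ([oA],gS,[])])"
lemma v_rDS[vals]: "valid rDS"
proof -
  have c0: "dn [oA] [([],gD,[]), ([],gD,[oA]), ([],(gBr [oA] [oA]),[oA]), ([],gS,[oA,oA]), ([oA],gS,[oA]), ([oA,oA],gD,[]), ([oA,oA,oA],gS,[]), ([oA,oA],gD,[oA]), ([oA,oA,oA,oA],gD,[]), ([oA,oA,oA],(gBr [oA] [oA]),[oA]), ([oA,oA],gM,[oA,oA]), ([oA,oA,oA],gM,[]), ([oA],(gBr [oA] [oA]),[oA]), ([],gM,[oA,oA]), ([oA],gM,[])] = dn [oA] [([],gD,[]), ([],(gBr [oA] [oA]),[]), ([],gS,[oA]), ([oA],gS,[])]"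
    by (rule chain[of "[Rw rH2b 5, Sw 6, Rw (natR gU [oA]) 7, Rw (brU [oA]) 7, Rw rUR 7, Rw rUR 6, Sw 4, Sw 3, Sw 2, Sw 1, Rw rCUR 0]"]) (simp add: vals rnes, simp add: ldom_def lcod_def, simp add: rdefs rwr_def swp_def wh_def Let_def)
  have c1: "dn [oA] [([],gD,[]), ([],gD,[oA]), ([],(gBr [oA] [oA]),[oA]), ([],gS,[oA,oA]), ([oA],gS,[oA]), ([oA,oA],gD,[]), ([oA,oA,oA],gS,[]), ([oA,oA],gD,[oA]), ([oA,oA,oA,oA],gD,[]), ([oA,oA,oA],(gBr [oA] [oA]),[oA]), ([oA,oA],gM,[oA,oA]), ([oA,oA,oA],gM,[]), ([oA],(gBr [oA] [oA]),[oA]), ([],gM,[oA,oA]), ([oA],gM,[])] = dn [oA] [([],gD,[]), ([oA],gD,[]), ([],gD,[oA,oA]), ([],(gBr [oA] [oA]),[oA,oA]), ([],gS,[oA,oA,oA]), ([oA],gS,[oA,oA]), ([oA,oA,oA],gS,[]), ([oA,oA],gD,[oA]), ([oA,oA,oA,oA],gD,[]), ([oA,oA,oA],(gBr [oA] [oA]),[oA]), ([oA,oA],gM,[oA,oA]), ([oA,oA,oA],gM,[]), ([oA],(gBr [oA] [oA]),[oA]), ([],gM,[oA,oA]), ([oA],gM,[])]"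
    by (rule chain[of "[Sw 4, Sw 3, Sw 2, Sw 1]"]) (simp add: vals rnes, simp add: ldom_def lcod_def, simp add: rdefs rwr_def swp_def wh_def Let_def)
  have c2: "dn [oA] [([],gD,[]), ([],gD,[oA]), ([],gD,[oA,oA]), ([],(gBr [oA] [oA]),[oA,oA]), ([],gS,[oA,oA,oA]), ([oA],gS,[oA,oA]), ([oA,oA],gD,[oA]), ([oA],(gBr [oA] [oA]),[oA,oA]), ([],gM,[oA,oA,oA]), ([oA],gM,[oA]), ([oA,oA],gS,[]), ([oA,oA],gD,[]), ([oA],(gBr [oA] [oA]),[oA]), ([],gM,[oA,oA]), ([oA],gM,[])] = dn [oA] [([],gD,[]), ([oA],gD,[]), ([],gD,[oA,oA]), ([],(gBr [oA] [oA]),[oA,oA]), ([],gS,[oA,oA,oA]), ([oA],gS,[oA,oA]), ([oA,oA,oA],gS,[]), ([oA,oA],gD,[oA]), ([oA,oA,oA,oA],gD,[]), ([oA,oA,oA],(gBr [oA] [oA]),[oA]), ([oA,oA],gM,[oA,oA]), ([oA,oA,oA],gM,[]), ([oA],(gBr [oA] [oA]),[oA]), ([],gM,[oA,oA]), ([oA],gM,[])]"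
    by (rule chain[of "[Rw rCoass 0, Sw 9, Sw 8, Sw 7, Sw 10, Sw 9, Sw 8, Rw rAssAA 9, Sw 6]"]) (simp add: vals rnes, simp add: ldom_def lcod_def, simp add: rdefs rwr_def swp_def wh_def Let_def)
  have c3: "dn [oA] [([],gD,[]), ([],gD,[oA]), ([],gD,[oA,oA]), ([],(gBr [oA] [oA]),[oA,oA]), ([],gS,[oA,oA,oA]), ([oA],gS,[oA,oA]), ([oA,oA],gD,[oA]), ([oA],(gBr [oA] [oA]),[oA,oA]), ([],gM,[oA,oA,oA]), ([oA],gM,[oA]), ([oA,oA],gS,[]), ([oA,oA],gD,[]), ([oA],(gBr [oA] [oA]),[oA]), ([],gM,[oA,oA]), ([oA],gM,[])] = dn [oA] [([],gS,[]), ([],gD,[])]"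
    by (rule chain[of "[Rw rH1b 1, Sw 3, Sw 4, Rw (natL gU [oA]) 5, Rw (brUL [oA]) 5, Sw 2, Sw 3, Sw 4, Rw rUL 5, Rw rUL 4, Rw rCUL 0]"]) (simp add: vals rnes, simp add: ldom_def lcod_def, simp add: rdefs rwr_def swp_def wh_def Let_def)
  have e: "dn [oA] [([],gS,[]), ([],gD,[])] = dn [oA] [([],gD,[]), ([],(gBr [oA] [oA]),[]), ([],gS,[oA]), ([oA],gS,[])]" using c0 c1 c2 c3 by metis
  show ?thesis unfolding valid_def rDS_def using e by (simp add: ldom_def lcod_def)
qed
declare rDS_def[rdefs]
lemma [rnes]: "snd rDS \<noteq> []" by (simp add: rDS_def)

definition "rG = ([([oA],gD,[]), ([],(gBr [oA] [oA]),[oA]), ([oA],gM,[]), ([oA],gS,[]), ([oA],gD,[]), ([],(gBr [oA] [oA]),[oA]), ([oA],gM,[])], [([],gD,[oA]), ([oA],gM,[]), ([],gS,[oA]), ([oA],gS,[]), ([],(gBr [oA] [oA]),[])])"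
lemma v_rG[vals]: "valid rG"
proof -
  have c0: "dn [oA,oA] [([oA],gD,[]), ([],(gBr [oA] [oA]),[oA]), ([oA],gM,[]), ([oA],gS,[]), ([oA],gD,[]), ([],(gBr [oA] [oA]),[oA]), ([oA],gM,[])] = dn [oA,oA] [([],gD,[oA]), ([oA],gM,[]), ([],gS,[oA]), ([oA],gS,[]), ([],(gBr [oA] [oA]),[])]"
    by (rule chain[of "[Rw rDS 3, Rw rBi 2, Sw 8, Rv (natL gS [oA]) 7, Sw 5, Rw rSm 6, Rv (natR gS [oA]) 10, Rv (hexR [oA] [oA] [oA]) 11, Rv (natL gM [oA]) 11, Sw 9, Rv rAss 10, Rw (natR gS [oA]) 7, Rw (natL gS [oA]) 6, Sw 5, Rv (hexR [oA] [oA] [oA]) 4, Sw 2, Rw (natL gD [oA]) 3, Sw 1, Rv (hexL [oA] [oA] [oA]) 2, Rv rCoass 0, Rw (natR gD [oA]) 1, Sw 5, Sw 4, Sw 3, Sw 7, Sw 6, Sw 5, Sw 4, Rw rAntR 2, Rv (natR gE [oA]) 1, Rw (brU [oA]) 2, Rw rCUL 0, Sw 0, Sw 1, Sw 2, Sw 3, Rw rUL 4]"]) (simp add: vals rnes, simp add: ldom_def lcod_def, simp add: rdefs rwr_def swp_def wh_def Let_def)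
  have e: "dn [oA,oA] [([oA],gD,[]), ([],(gBr [oA] [oA]),[oA]), ([oA],gM,[]), ([oA],gS,[]), ([oA],gD,[]), ([],(gBr [oA] [oA]),[oA]), ([oA],gM,[])] = dn [oA,oA] [([],gD,[oA]), ([oA],gM,[]), ([],gS,[oA]), ([oA],gS,[]), ([],(gBr [oA] [oA]),[])]" using c0 by metis
  show ?thesis unfolding valid_def rG_def using e by (simp add: ldom_def lcod_def)
qed
declare rG_def[rdefs]
lemma [rnes]: "snd rG \<noteq> []" by (simp add: rG_def)

lemma mainD: "dn [oA,oB] [([oA],gC,[]), ([],(gBr [oA] [oB]),[oA]), ([oB],gM,[]), ([oB],gS,[]), ([oB],gD,[]), ([],gT,[oA,oA]), ([],(gBr [oB] [oA]),[oA]), ([oA],gR,[]), ([oA],gC,[]), ([],(gBr [oA] [oB]),[oA]), ([oB],gM,[]), ([oB],gS,[]), ([oB],gD,[]), ([],gT,[oA,oA]), ([],(gBr [oB] [oA]),[oA]), ([oA],gR,[])] = dn [oA,oB] [([oA],gC,[]), ([oA,oB],gS,[]), ([oA],gR,[]), ([],(gBr [oA] [oB]),[]), ([],(gBr [oB] [oA]),[]), ([],gS,[oB]), ([],gS,[oB]), ([oA],gT,[]), ([oA],gT,[])]"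
proof -
  have m0: "dn [oA,oB] [([oA],gC,[]), ([],(gBr [oA] [oB]),[oA]), ([oB],gM,[]), ([oB],gS,[]), ([oB],gD,[]), ([],gT,[oA,oA]), ([],(gBr [oB] [oA]),[oA]), ([oA],gR,[]), ([oA],gC,[]), ([],(gBr [oA] [oB]),[oA]), ([oB],gM,[]), ([oB],gS,[]), ([oB],gD,[]), ([],gT,[oA,oA]), ([],(gBr [oB] [oA]),[oA]), ([oA],gR,[])] = dn [oA,oB] [([oA],gC,[]), ([],(gBr [oA] [oB]),[oA]), ([oB],gM,[]), ([oB],gS,[]), ([],gC,[oA]), ([],gT,[oA,oA]), ([],gT,[oA,oA]), ([oB,oA],gD,[]), ([oB],(gBr [oA] [oA]),[oA]), ([oB,oA],gM,[]), ([oB,oA],gS,[]), ([oB,oA],gD,[]), ([],gR,[oA,oA]), ([],(gBr [oB] [oA]),[oA]), ([oA],gR,[])]"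
    by (rule chain[of "[Sw 4, Rw rYD 5, Sw 11, Sw 10, Sw 9, Rw rTR 8, Sw 7, Sw 6, Rw rTC 4, Sw 9, Sw 10, Sw 11]"]) (simp add: vals rnes, simp add: ldom_def lcod_def, simp add: rdefs rwr_def swp_def wh_def Let_def)
  have m1: "dn [oA,oB] [([oA],gC,[]), ([],(gBr [oA] [oB]),[oA]), ([oB],gM,[]), ([oB],gS,[]), ([],gC,[oA]), ([],gT,[oA,oA]), ([],gT,[oA,oA]), ([oB,oA],gD,[]), ([oB],(gBr [oA] [oA]),[oA]), ([oB,oA],gM,[]), ([oB,oA],gS,[]), ([oB,oA],gD,[]), ([],gR,[oA,oA]), ([],(gBr [oB] [oA]),[oA]), ([oA],gR,[])] = dn [oA,oB] [([oA],gC,[]), ([],(gBr [oA] [oB]),[oA]), ([oB],gS,[oA]), ([oB,oA],gS,[]), ([],gC,[oA,oA]), ([oB,oA],(gBr [oA] [oA]),[]), ([],gT,[oA,oA,oA]), ([],gT,[oA,oA,oA]), ([oB],gD,[oA,oA]), ([oB,oA],gM,[oA]), ([oB,oA],gM,[]), ([oB],gS,[oA]), ([oB,oA],gS,[]), ([oB],(gBr [oA] [oA]),[]), ([],(gBr [oB] [oA]),[oA]), ([oA],gR,[])]"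
    by (rule chain[of "[Rw (natL gR [oA]) 12, Rw (hexR [oB] [oA] [oA]) 12, Rw rRass 14, Sw 13, Rw rG 7, Rw rSm 2, Sw 5, Sw 6, Sw 7, Sw 8, Rv rAss 9, Sw 4]"]) (simp add: vals rnes, simp add: ldom_def lcod_def, simp add: rdefs rwr_def swp_def wh_def Let_def)
  have m2: "dn [oA,oB] [([oA],gC,[]), ([],(gBr [oA] [oB]),[oA]), ([oB],gS,[oA]), ([oB,oA],gS,[]), ([],gC,[oA,oA]), ([oB,oA],(gBr [oA] [oA]),[]), ([],gT,[oA,oA,oA]), ([],gT,[oA,oA,oA]), ([oB],gD,[oA,oA]), ([oB,oA],gM,[oA]), ([oB,oA],gM,[]), ([oB],gS,[oA]), ([oB,oA],gS,[]), ([oB],(gBr [oA] [oA]),[]), ([],(gBr [oB] [oA]),[oA]), ([oA],gR,[])] = dn [oA,oB] [([oA],gC,[]), ([oA,oB],gD,[]), ([oA],gT,[oA,oA]), ([],(gBr [oA] [oB,oA,oA]),[]), ([],gT,[oA,oA,oA]), ([oB,oA,oA],gS,[]), ([oB,oA],gS,[oA]), ([oB],gD,[oA,oA]), ([oB,oA],gM,[oA]), ([oB,oA],gM,[]), ([oB],gS,[oA]), ([oB,oA],gS,[]), ([oB],(gBr [oA] [oA]),[]), ([],(gBr [oB] [oA]),[oA]), ([oA],gR,[])]"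
    by (rule chain[of "[Sw 3, Sw 2, Rv (natR gC [oA]) 1, Rw rCass 0, Rw (natR gS [oA]) 4, Rw (natL gS [oA]) 3, Rv (hexL [oA] [oB,oA] [oA]) 2, Sw 4, Sw 3, Sw 5, Sw 4, Rv (natRw [oA] [] gT [oA,oA]) 2]"]) (simp add: vals rnes, simp add: ldom_def lcod_def, simp add: rdefs rwr_def swp_def wh_def Let_def)
  have m3: "dn [oA,oB] [([oA],gC,[]), ([oA,oB],gD,[]), ([oA],gT,[oA,oA]), ([],(gBr [oA] [oB,oA,oA]),[]), ([],gT,[oA,oA,oA]), ([oB,oA,oA],gS,[]), ([oB,oA],gS,[oA]), ([oB],gD,[oA,oA]), ([oB,oA],gM,[oA]), ([oB,oA],gM,[]), ([oB],gS,[oA]), ([oB,oA],gS,[]), ([oB],(gBr [oA] [oA]),[]), ([],(gBr [oB] [oA]),[oA]), ([oA],gR,[])] = dn [oA,oB] [([oA],gC,[]), ([oA,oB],gD,[]), ([oA,oB,oA],gD,[]), ([oA],gT,[oA,oA,oA]), ([oA,oB,oA,oA],gS,[]), ([oA],gT,[oA,oA,oA]), ([oA,oB,oA],gM,[]), ([],(gBr [oA] [oB,oA,oA]),[]), ([oB,oA,oA],gS,[]), ([oB,oA],gM,[]), ([oB],gS,[oA]), ([oB,oA],gS,[]), ([oB],(gBr [oA] [oA]),[]), ([],(gBr [oB] [oA]),[oA]), ([oA],gR,[])]"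
    by (rule chain[of "[Rv (natRw [oA] [] gT [oA,oA]) 3, Sw 6, Sw 5, Rv (natRw [oA] [oB] gD [oA]) 4, Sw 3, Sw 2, Rw rCoass 1, Sw 6, Sw 7, Rv (natRw [oA] [oB,oA,oA] gS []) 5, Rv (natRw [oA] [oB,oA] gM []) 6, Sw 4]"]) (simp add: vals rnes, simp add: ldom_def lcod_def, simp add: rdefs rwr_def swp_def wh_def Let_def)
  have m4: "dn [oA,oB] [([oA],gC,[]), ([oA,oB],gD,[]), ([oA,oB,oA],gD,[]), ([oA],gT,[oA,oA,oA]), ([oA,oB,oA,oA],gS,[]), ([oA],gT,[oA,oA,oA]), ([oA,oB,oA],gM,[]), ([],(gBr [oA] [oB,oA,oA]),[]), ([oB,oA,oA],gS,[]), ([oB,oA],gM,[]), ([oB],gS,[oA]), ([oB,oA],gS,[]), ([oB],(gBr [oA] [oA]),[]), ([],(gBr [oB] [oA]),[oA]), ([oA],gR,[])] = dn [oA,oB] [([oA],gC,[]), ([oA],gT,[oA]), ([oA],gT,[oA]), ([oA,oB],gS,[]), ([],(gBr [oA] [oB,oA]),[]), ([oB,oA],gS,[]), ([oB,oA],gS,[]), ([oB],(gBr [oA] [oA]),[]), ([],(gBr [oB] [oA]),[oA]), ([oA],gR,[])]"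
    by (rule chain[of "[Sw 3, Sw 5, Sw 4, Rw rAntR 2, Rw rCUR 1, Sw 1, Sw 2, Rw (natRw [oA] [oB,oA] gU []) 3, Sw 4, Rw rUL 5, Sw 4, Rv (natRw [oA] [oB] gS []) 3]"]) (simp add: vals rnes, simp add: ldom_def lcod_def, simp add: rdefs rwr_def swp_def wh_def Let_def)
  have m5: "dn [oA,oB] [([oA],gC,[]), ([oA],gT,[oA]), ([oA],gT,[oA]), ([oA,oB],gS,[]), ([],(gBr [oA] [oB,oA]),[]), ([oB,oA],gS,[]), ([oB,oA],gS,[]), ([oB],(gBr [oA] [oA]),[]), ([],(gBr [oB] [oA]),[oA]), ([oA],gR,[])] = dn [oA,oB] [([oA],gC,[]), ([oA,oB],gS,[]), ([oA],gT,[oA]), ([oA],gR,[]), ([oA],gT,[]), ([],(gBr [oA] [oB]),[]), ([],(gBr [oB] [oA]),[]), ([],gS,[oB]), ([],gS,[oB])]"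
    by (rule chain[of "[Rw (natR gS [oA]) 6, Rw (natR gS [oA]) 5, Rw (natR gS [oB]) 7, Rw (natR gS [oB]) 6, Rv (hexR [oB] [oA] [oA]) 5, Sw 7, Sw 6, Rv (natL gR [oA]) 5, Rv (natR gR [oA]) 4, Sw 2, Sw 1, Rv rTR 3]"]) (simp add: vals rnes, simp add: ldom_def lcod_def, simp add: rdefs rwr_def swp_def wh_def Let_def)
  have m6: "dn [oA,oB] [([oA],gC,[]), ([oA,oB],gS,[]), ([oA],gT,[oA]), ([oA],gR,[]), ([oA],gT,[]), ([],(gBr [oA] [oB]),[]), ([],(gBr [oB] [oA]),[]), ([],gS,[oB]), ([],gS,[oB])] = dn [oA,oB] [([oA],gC,[]), ([oA,oB],gS,[]), ([oA],gR,[]), ([],(gBr [oA] [oB]),[]), ([],(gBr [oB] [oA]),[]), ([],gS,[oB]), ([],gS,[oB]), ([oA],gT,[]), ([oA],gT,[])]"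
    by (rule chain[of "[Rv rTR 2, Rw (natR gT [oA]) 4, Rw (natL gT [oA]) 5, Rw (natR gT [oA]) 3, Rw (natL gT [oA]) 4, Sw 6, Sw 7, Sw 5, Sw 6]"]) (simp add: vals rnes, simp add: ldom_def lcod_def, simp add: rdefs rwr_def swp_def wh_def Let_def)
  show ?thesis using m0 m1 m2 m3 m4 m5 m6 by simp
qed

lemma T_dn: "cross_antipode C A muA DeA SA B act coact SB = dn [oA,oB] [([oA],gC,[]), ([],(gBr [oA] [oB]),[oA]), ([oB],gM,[]), ([oB],gS,[]), ([oB],gD,[]), ([],gT,[oA,oA]), ([],(gBr [oB] [oA]),[oA]), ([oA],gR,[])]"
  unfolding cross_antipode_def
  by (simp add: tr dc tm_split2[of SB "Cmp C DeA (Cmp C SA muA)"])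

lemma TGT_dn: "Cmp C (TM C (Cmp C SA SA) (Cmp C SB SB)) (Cmp C (Br C B A) (Cmp C (Br C A B) (TM C (Id C A) (sigma_BA C SA B act coact))))
  = dn [oA,oB] [([oA],gC,[]), ([oA,oB],gS,[]), ([oA],gR,[]), ([],(gBr [oA] [oB]),[]), ([],(gBr [oB] [oA]),[]), ([],gS,[oB]), ([],gS,[oB]), ([oA],gT,[]), ([oA],gT,[])]"
  unfolding sigma_BA_def
  by (simp add: tr dc tm_split1[of "Cmp C SA SA" "Cmp C SB SB"] tm_id[symmetric])

lemma main: "Cmp C (cross_antipode C A muA DeA SA B act coact SB) (cross_antipode C A muA DeA SA B act coact SB)
   = Cmp C (TM C (Cmp C SA SA) (Cmp C SB SB)) (Cmp C (Br C B A) (Cmp C (Br C A B) (TM C (Id C A) (sigma_BA C SA B act coact))))"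
proof -
  let ?T = "[([oA],gC,[]), ([],(gBr [oA] [oB]),[oA]), ([oB],gM,[]), ([oB],gS,[]), ([oB],gD,[]), ([],gT,[oA,oA]), ([],(gBr [oB] [oA]),[oA]), ([oA],gR,[])]"
  have w: "wtd [oA,oB] ?T" "codd [oA,oB] ?T = [oA,oB]" by (simp_all add: ldom_def lcod_def)
  have "dn [oA,oB] (?T @ ?T) = Cmp C (dn [oA,oB] ?T) (dn [oA,oB] ?T)"
  proof -
    have h: "hom C (dn [oA,oB] ?T) (obs [oA,oB]) (obs [oA,oB])" using dn_hom[OF w(1)] w(2) by simp
    show ?thesis unfolding dn_append using ev_dn[OF w(1) h] by simp
  qed
  then show ?thesis unfolding T_dn TGT_dn using mainD by simp
qed

end

theorem mainTheorem15:
  fixes C :: "('o, 'm) bmcat"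
  assumes "braided_strict_monoidal C"
    and "braided_group C A muA etaA DeA epA SA"
    and "braided_group_YD C A muA etaA DeA epA B act coact muB etaB DeB epB SB"
  shows "Cmp C (cross_antipode C A muA DeA SA B act coact SB)
               (cross_antipode C A muA DeA SA B act coact SB)
         = Cmp C (TM C (Cmp C SA SA) (Cmp C SB SB))
             (Cmp C (Br C B A) (Cmp C (Br C A B) (TM C (Id C A) (sigma_BA C SA B act coact))))"
proof -
  have h: "hctx C A B muA etaA DeA epA SA act coact SB"
  proof (intro hctx.intro hctx_axioms.intro)
    show "bsmc C" using assms(1) by (rule bsmc.intro)
    show "hopf_ax C A muA etaA DeA epA SA (Br C A A)" using assms(2) by (simp add: braided_group_def)
    show "yd_mod C A muA etaA DeA epA B act coact" using assms(3) by (simp add: braided_group_YD_def)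
    show "yd_hom C A SB act coact act coact" using assms(3) by (simp add: braided_group_YD_def Let_def)
    show "hom C SB B B" using assms(3) by (simp add: braided_group_YD_def hopf_ax_def)
  qed
  show ?thesis by (rule hctx.main[OF h])
qed

end
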